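(* Consider the fine-grid operators $A=A^T\le 0$, $A\in\mathbb{R}^{N\times N}$, and diagonal $B>0$, split over subdomains $\Omega_i$, $i=1,\ldots,N_c$, as $A+\omega^2B=\sum_i P_i(A_i+\omega^2B_i)P_i^T$ with $A_i\le 0$, $B_i>0$, where the subdomains are coupled only through their pairwise intersections $\Gamma_{ij}$ (assumed to contain no "corner" nodes shared by more than two subdomains). For each subdomain, let $S_i$ be a block-diagonal matrix with orthonormal-column blocks $S_{ij}$ (compressing the boundary $\Gamma_{ij}$ to $\widetilde K_{ij}$ degrees of freedom, $\widetilde K_i=\sum_j \widetilde K_{ij}$), and let $\widetilde F_i^m(\omega^2)=(S_i^m)^T(A_i^m+\omega^2B_i^m)^{-1}S_i^m$ be the reduced-order model of the projected Neumann-to-Dirichlet map obtained by Galerkin projection of $A_i,B_i$ and of the boundary inputs onto an orthonormal basis of the block rational Krylov subspace of dimension $m\widetilde K_i$. Assume that for every subdomain the McMillan degree of $\widetilde F_i^m$ equals $2m\widetilde K_i$, so that $\widetilde F_i^m$ admits a matrix Stieltjes continued fraction (S-fraction) representation with symmetric positive definite coefficients $L_i^k,\widehat L_i^k\in\mathbb{R}^{\widetilde K_i\times\widetilde K_i}$, $k=1,\ldots,m$. Define the multiscale ROM map $\widetilde F^m(\lambda):\widetilde g\mapsto\widetilde u$, where $\widetilde g,\widetilde u\in\mathbb{R}^{\widetilde K}$, $\widetilde K=\sum_{i,j}\widetilde K_{ij}$, are the direct sums of $\widetilde g_{ij}=S_{ij}^Tg|_{\Gamma_{ij}}$ and $\widetilde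 u_{ij}$ over adjacent pairs, and $\widetilde u$ is obtained by solving, for all $i$ and all adjacent $j$, $L_i^k(U_i^{k+1}-U_i^k)-L_i^{k-1}(U_i^k-U_i^{k-1})+\lambda(\widehat L_i^k)^{-1}U_i^k=0$, $k=2,\ldots,m$, $U_i^{m+1}=0$; $\widetilde P_{ij}^T L_i^1(U_i^2-U_i^1)+\widetilde P_{ji}^T L_j^1(U_j^2-U_j^1)+\lambda\big(\widetilde P_{ij}^T(\widehat L_i^1)^{-1}U_i^1+\widetilde P_{ji}^T(\widehat L_j^1)^{-1}U_j^1\big)=\widetilde g_{ij}$; $\widetilde u_{ij}=\widetilde P_{ij}^TU_i^1=\widetilde P_{ji}^TU_j^1$, with $\widetilde P_{ij}^T$ the restriction from the $\widetilde K_i$ compressed boundary unknowns of $\Omega_i$ to those associated with $\Gamma_{ij}$. Then $\widetilde F^m(\lambda)$ is a $(0,\infty)$-Stieltjes function of order $\widetilde K$, i.e. it is holomorphic in $\mathbb{C}\setminus(0,+\infty)$, $\operatorname{Im}\widetilde F^m(\lambda)$ is Hermitian non-negative definite for $\operatorname{Im}\lambda>0$, and $\widetilde F^m(\lambda)$ is Hermitian non-negative definite for $\lambda\in(-\infty,0)$. Moreover, non-negative definiteness can be replaced by positive definiteness in the last two conditions.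
   Context: Setting: multiscale S-fraction reduced-order model (MSSFROM) for the semi-discrete wave problem $Au-Bu_{tt}=g\delta(t)$, with inputs/outputs supported on the partition skeleton $\Gamma=\bigcup\Gamma_i$.
   Formalization: $-\widetilde F^m(\lambda)$ stands in place of $\widetilde F^m(\lambda)$ as the $(0,\infty)$-Stieltjes function of order $\widetilde K$, both with non-negative and with positive definiteness in the last two conditions. The statement above fails without it. *)

theory Defs
  imports "HOL-Analysis.Analysis"
begin

text \<open>Subdomains are \<open>i < Nc\<close>; \<open>adj i j\<close> means that \<open>\<Omega>_i\<close> and \<open>\<Omega>_j\<close> share an interface \<open>\<Gamma>_ij\<close>;
  \<open>Kt i j\<close> is the number \<open>K~_ij\<close> of compressed degrees of freedom on \<open>\<Gamma>_ij\<close>.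
  The \<open>K~_i\<close> compressed boundary unknowns of \<open>\<Omega>_i\<close> are indexed by pairs \<open>(j,a)\<close>
  with \<open>adj i j\<close> and \<open>a < Kt i j\<close>; the restriction \<open>P~_ij^T\<close> picks the components
  \<open>(j,a)\<close>, \<open>a < Kt i j\<close>.  The interface unknowns \<open>g~, u~\<close> (direct sum over adjacent
  unordered pairs) are indexed by triples \<open>(i,j,a)\<close> with \<open>i < j\<close>.\<close>

definition bnd :: "nat \<Rightarrow> (nat \<Rightarrow> nat \<Rightarrow> bool) \<Rightarrow> (nat \<Rightarrow> nat \<Rightarrow> nat) \<Rightarrow> nat \<Rightarrow> (nat \<times> nat) set" where
  "bnd Nc adj Kt i = {(j, a). j < Nc \<and> adj i j \<and> a < Kt i j}"

definition iface :: "nat \<Rightarrow> (nat \<Rightarrow> nat \<Rightarrow> bool) \<Rightarrow> (nat \<Rightarrow> nat \<Rightarrow> nat) \<Rightarrow> (nat \<times> nat \<times> nat) set" where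
  "iface Nc adj Kt = {(i, j, a). i < Nc \<and> j < Nc \<and> i < j \<and> adj i j \<and> a < Kt i j}"

definition spd_on :: "'i set \<Rightarrow> ('i \<Rightarrow> 'i \<Rightarrow> real) \<Rightarrow> bool" where
  "spd_on I M \<longleftrightarrow> (\<forall>x\<in>I. \<forall>y\<in>I. M x y = M y x) \<and>
     (\<forall>v. (\<exists>x\<in>I. v x \<noteq> 0) \<longrightarrow> 0 < (\<Sum>x\<in>I. \<Sum>y\<in>I. v x * M x y * v y))"

definition herm_psd :: "'i set \<Rightarrow> ('i \<Rightarrow> 'i \<Rightarrow> complex) \<Rightarrow> bool" where
  "herm_psd I M \<longleftrightarrow> (\<forall>x\<in>I. \<forall>y\<in>I. M y x = cnj (M x y)) \<and>
     (\<forall>v. 0 \<le> Re (\<Sum>x\<in>I. \<Sum>y\<in>I. cnj (v x) * M x y * v y))"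

definition herm_pd :: "'i set \<Rightarrow> ('i \<Rightarrow> 'i \<Rightarrow> complex) \<Rightarrow> bool" where
  "herm_pd I M \<longleftrightarrow> (\<forall>x\<in>I. \<forall>y\<in>I. M y x = cnj (M x y)) \<and>
     (\<forall>v. (\<exists>x\<in>I. v x \<noteq> 0) \<longrightarrow> 0 < Re (\<Sum>x\<in>I. \<Sum>y\<in>I. cnj (v x) * M x y * v y))"

definition mat_Im :: "('i \<Rightarrow> 'i \<Rightarrow> complex) \<Rightarrow> 'i \<Rightarrow> 'i \<Rightarrow> complex" where
  "mat_Im M x y = (M x y - cnj (M y x)) / (2 * \<i>)"

definition pos_ray :: "complex set" where
  "pos_ray = complex_of_real ` {0<..}"

definition stieltjes_0inf :: "'i set \<Rightarrow> (complex \<Rightarrow> 'i \<Rightarrow> 'i \<Rightarrow> complex) \<Rightarrow> bool" where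
  "stieltjes_0inf I F \<longleftrightarrow>
     (\<forall>x\<in>I. \<forall>y\<in>I. (\<lambda>z. F z x y) holomorphic_on (- pos_ray)) \<and>
     (\<forall>z. 0 < Im z \<longrightarrow> herm_psd I (mat_Im (F z))) \<and>
     (\<forall>t::real. t < 0 \<longrightarrow> herm_psd I (F (complex_of_real t)))"

definition mv :: "'i set \<Rightarrow> ('i \<Rightarrow> 'i \<Rightarrow> real) \<Rightarrow> ('i \<Rightarrow> complex) \<Rightarrow> 'i \<Rightarrow> complex" where
  "mv I M U x = (\<Sum>y\<in>I. complex_of_real (M x y) * U y)"

text \<open>\<open>U\<close> solves the multiscale S-fraction system with spectral parameter \<open>lam\<close> and
  input \<open>g\<close>.  \<open>U i k\<close> is the vector \<open>U_i^k\<close> (\<open>k = 1..m\<close>), extended by zero outside the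
  valid index range (so in particular \<open>U_i^{m+1} = 0\<close>).  \<open>Lhi i k\<close> is \<open>(L^_i^k)^{-1}\<close>.\<close>
definition msfrom_solves ::
  "nat \<Rightarrow> (nat \<Rightarrow> nat \<Rightarrow> bool) \<Rightarrow> (nat \<Rightarrow> nat \<Rightarrow> nat) \<Rightarrow> nat \<Rightarrow>
   (nat \<Rightarrow> nat \<Rightarrow> (nat \<times> nat) \<Rightarrow> (nat \<times> nat) \<Rightarrow> real) \<Rightarrow>
   (nat \<Rightarrow> nat \<Rightarrow> (nat \<times> nat) \<Rightarrow> (nat \<times> nat) \<Rightarrow> real) \<Rightarrow>
   complex \<Rightarrow> (nat \<times> nat \<times> nat \<Rightarrow> complex) \<Rightarrow> (nat \<Rightarrow> nat \<Rightarrow> (nat \<times> nat) \<Rightarrow> complex) \<Rightarrow> bool" where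
  "msfrom_solves Nc adj Kt m L Lhi lam g U \<longleftrightarrow>
     (\<forall>i k x. \<not> (i < Nc \<and> 1 \<le> k \<and> k \<le> m \<and> x \<in> bnd Nc adj Kt i) \<longrightarrow> U i k x = 0) \<and>
     (\<forall>i<Nc. \<forall>k\<in>{2..m}. \<forall>x\<in>bnd Nc adj Kt i.
        mv (bnd Nc adj Kt i) (L i k) (\<lambda>y. U i (k+1) y - U i k y) x
      - mv (bnd Nc adj Kt i) (L i (k-1)) (\<lambda>y. U i k y - U i (k-1) y) x
      + lam * mv (bnd Nc adj Kt i) (Lhi i k) (U i k) x = 0) \<and>
     (\<forall>(i,j,a)\<in>iface Nc adj Kt.
        mv (bnd Nc adj Kt i) (L i 1) (\<lambda>y. U i 2 y - U i 1 y) (j,a)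
      + mv (bnd Nc adj Kt j) (L j 1) (\<lambda>y. U j 2 y - U j 1 y) (i,a)
      + lam * (mv (bnd Nc adj Kt i) (Lhi i 1) (U i 1) (j,a)
             + mv (bnd Nc adj Kt j) (Lhi j 1) (U j 1) (i,a)) = g (i,j,a)) \<and>
     (\<forall>(i,j,a)\<in>iface Nc adj Kt. U i 1 (j,a) = U j 1 (i,a))"

definition msfrom_output :: "(nat \<Rightarrow> nat \<Rightarrow> (nat \<times> nat) \<Rightarrow> complex) \<Rightarrow> nat \<times> nat \<times> nat \<Rightarrow> complex" where
  "msfrom_output U t = (case t of (i, j, a) \<Rightarrow> U i 1 (j, a))"

end

theory Submission
  imports Defs "Jordan_Normal_Form.Determinant"
begin


lemma det_mat_holo:
  fixes C :: "complex \<Rightarrow> nat \<Rightarrow> nat \<Rightarrow> complex"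
  assumes "\<And>i j. (\<lambda>z. C z i j) holomorphic_on S"
  shows "(\<lambda>z. Determinant.det (Matrix.mat k k (\<lambda>(i,j). C z i j))) holomorphic_on S"
proof -
  have eq: "Determinant.det (Matrix.mat k k (\<lambda>(i,j). C z i j)) =
    (\<Sum>p\<in>{p. p permutes {0..<k}}. of_int (sign p) * (\<Prod>i = 0..<k. C z i (p i)))" for z
  proof -
    have "Determinant.det (Matrix.mat k k (\<lambda>(i,j). C z i j)) =
      (\<Sum>p\<in>{p. p permutes {0..<k}}. signof p * (\<Prod>i = 0..<k. Matrix.mat k k (\<lambda>(i,j). C z i j) $$ (i, p i)))"
      by (rule det_def') simp
    also have "\<dots> = (\<Sum>p\<in>{p. p permutes {0..<k}}. of_int (sign p) * (\<Prod>i = 0..<k. C z i (p i)))"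
    proof (rule sum.cong[OF refl])
      fix p assume "p \<in> {p. p permutes {0..<k}}"
      then have "p permutes {0..<k}" by simp
      then have "\<And>i. i \<in> {0..<k} \<Longrightarrow> p i < k" using permutes_in_image by fastforce
      then show "signof p * (\<Prod>i = 0..<k. Matrix.mat k k (\<lambda>(i,j). C z i j) $$ (i, p i)) =
        of_int (sign p) * (\<Prod>i = 0..<k. C z i (p i))"
        by (auto intro!: prod.cong)
    qed
    finally show ?thesis .
  qed
  show ?thesis unfolding eq
    by (intro holomorphic_intros assms)
qed


lemma inv_holo_nat:
  fixes A :: "complex \<Rightarrow> nat \<Rightarrow> nat \<Rightarrow> complex"
  assumes hol: "\<And>i j. (\<lambda>z. A z i j) holomorphic_on S"
    and inj: "\<And>z v. z \<in> S \<Longrightarrow> (\<forall>i<n. (\<Sum>j<n. A z i j * v j) = 0) \<Longrightarrow> \<forall>j<n. v j = 0"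
  shows "\<exists>B. (\<forall>i j. (\<lambda>z. B z i j) holomorphic_on S) \<and>
   (\<forall>z\<in>S. \<forall>i<n. \<forall>k<n. (\<Sum>j<n. B z i j * A z j k) = (if i = k then 1 else 0)) \<and>
   (\<forall>z\<in>S. \<forall>i<n. \<forall>k<n. (\<Sum>j<n. A z i j * B z j k) = (if i = k then 1 else 0))"
proof -
  define M where "M z = Matrix.mat n n (\<lambda>(i,j). A z i j)" for z
  have Mc: "M z \<in> carrier_mat n n" for z by (simp add: M_def)
  have Mi: "i < n \<Longrightarrow> j < n \<Longrightarrow> M z $$ (i,j) = A z i j" for z i j by (simp add: M_def)
  have detnz: "Determinant.det (M z) \<noteq> 0" if z: "z \<in> S" for z
  proof
    assume "Determinant.det (M z) = 0"
    then obtain v where v: "v \<in> carrier_vec n" "v \<noteq> 0\<^sub>v n" "M z *\<^sub>v v = 0\<^sub>v n"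
      using det_0_iff_vec_prod_zero_field[OF Mc] by blast
    have "\<forall>i<n. (\<Sum>j<n. A z i j * v $ j) = 0"
    proof (intro allI impI)
      fix i assume i: "i < n"
      have "(M z *\<^sub>v v) $ i = 0" using v(3) i by simp
      moreover have "(M z *\<^sub>v v) $ i = (\<Sum>j<n. A z i j * v $ j)"
        using i v(1) by (simp add: M_def scalar_prod_def lessThan_atLeast0)
      ultimately show "(\<Sum>j<n. A z i j * v $ j) = 0" by simp
    qed
    from inj[OF z this] have "\<forall>j<n. v $ j = 0" .
    then have "v = 0\<^sub>v n" using v(1) by (intro eq_vecI) auto
    with v(2) show False by simp
  qed
  define B where "B z i j = (if i < n \<and> j < n then cofactor (M z) j i / Determinant.det (M z) else 0)" for z i j
  have hdet: "(\<lambda>z. Determinant.det (M z)) holomorphic_on S"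
    unfolding M_def by (rule det_mat_holo[OF hol])
  have hcof: "(\<lambda>z. cofactor (M z) j i) holomorphic_on S" if "i < n" "j < n" for i j
  proof -
    define f where "f a = (if a < j then a else Suc a)" for a
    define g where "g b = (if b < i then b else Suc b)" for b
    have "mat_delete (M z) j i = Matrix.mat (n-1) (n-1) (\<lambda>(a,b). A z (f a) (g b))" for z
      by (rule eq_matI) (use that in \<open>auto simp: mat_delete_def M_def f_def g_def\<close>)
    then have eq: "cofactor (M z) j i = (-1)^(j+i) * Determinant.det (Matrix.mat (n-1) (n-1) (\<lambda>(a,b). A z (f a) (g b)))" for z
      by (simp add: cofactor_def)
    show ?thesis unfolding eq
      by (intro holomorphic_intros det_mat_holo hol)
  qed
  have hB: "(\<lambda>z. B z i j) holomorphic_on S" for i j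
  proof (cases "i < n \<and> j < n")
    case True
    then show ?thesis unfolding B_def
      by (simp, intro holomorphic_on_divide hcof hdet) (auto dest: detnz)
  next
    case False
    then have "(\<lambda>z. B z i j) = (\<lambda>z. 0)" unfolding B_def by (auto simp: fun_eq_iff)
    then show ?thesis by simp
  qed
  have left: "(\<Sum>j<n. B z i j * A z j k) = (if i = k then 1 else 0)" if z: "z \<in> S" and i: "i < n" and k: "k < n" for z i k
  proof -
    have "(adj_mat (M z) * M z) $$ (i,k) = (Determinant.det (M z) \<cdot>\<^sub>m 1\<^sub>m n) $$ (i,k)"
      using adj_mat(3)[OF Mc] by simp
    moreover have "(adj_mat (M z) * M z) $$ (i,k) = (\<Sum>j<n. cofactor (M z) j i * A z j k)"
      using i k Mc by (simp add: adj_mat_def scalar_prod_def lessThan_atLeast0 M_def)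
    moreover have "(Determinant.det (M z) \<cdot>\<^sub>m 1\<^sub>m n) $$ (i,k) = Determinant.det (M z) * (if i = k then 1 else 0)"
      using i k by simp
    ultimately have "(\<Sum>j<n. cofactor (M z) j i * A z j k) = Determinant.det (M z) * (if i = k then 1 else 0)" by simp
    then have "(\<Sum>j<n. cofactor (M z) j i * A z j k) / Determinant.det (M z) = (if i = k then 1 else 0)"
      using detnz[OF z] by simp
    moreover have "(\<Sum>j<n. B z i j * A z j k) = (\<Sum>j<n. cofactor (M z) j i * A z j k) / Determinant.det (M z)"
      using i by (simp add: B_def sum_divide_distrib)
    ultimately show ?thesis by simp
  qed
  have right: "(\<Sum>j<n. A z i j * B z j k) = (if i = k then 1 else 0)" if z: "z \<in> S" and i: "i < n" and k: "k < n" for z i k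
  proof -
    have "(M z * adj_mat (M z)) $$ (i,k) = (Determinant.det (M z) \<cdot>\<^sub>m 1\<^sub>m n) $$ (i,k)"
      using adj_mat(2)[OF Mc] by simp
    moreover have "(M z * adj_mat (M z)) $$ (i,k) = (\<Sum>j<n. A z i j * cofactor (M z) k j)"
      using i k Mc by (simp add: adj_mat_def scalar_prod_def lessThan_atLeast0 M_def)
    moreover have "(Determinant.det (M z) \<cdot>\<^sub>m 1\<^sub>m n) $$ (i,k) = Determinant.det (M z) * (if i = k then 1 else 0)"
      using i k by simp
    ultimately have "(\<Sum>j<n. A z i j * cofactor (M z) k j) = Determinant.det (M z) * (if i = k then 1 else 0)" by simp
    then have "(\<Sum>j<n. A z i j * cofactor (M z) k j) / Determinant.det (M z) = (if i = k then 1 else 0)"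
      using detnz[OF z] by simp
    moreover have "(\<Sum>j<n. A z i j * B z j k) = (\<Sum>j<n. A z i j * cofactor (M z) k j) / Determinant.det (M z)"
      using k by (simp add: B_def sum_divide_distrib)
    ultimately show ?thesis by simp
  qed
  show ?thesis using hB left right by blast
qed


lemma sum_delta_mult:
  fixes f :: "'b \<Rightarrow> 'c::comm_ring_1"
  assumes "finite S" shows "(\<Sum>l\<in>S. (if a = l then 1 else 0) * f l) = (if a \<in> S then f a else 0)"
  using assms by (induct S rule: finite_induct) auto

lemma inv_holo_set:
  fixes D :: "'a set" and A :: "complex \<Rightarrow> 'a \<Rightarrow> 'a \<Rightarrow> complex"
  assumes fin: "finite D" and hol: "\<And>x y. (\<lambda>z. A z x y) holomorphic_on S"
    and inj: "\<And>z v. z \<in> S \<Longrightarrow> (\<forall>x\<in>D. (\<Sum>y\<in>D. A z x y * v y) = 0) \<Longrightarrow> \<forall>y\<in>D. v y = 0"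
  shows "\<exists>B. (\<forall>x y. (\<lambda>z. B z x y) holomorphic_on S) \<and>
   (\<forall>z\<in>S. \<forall>v. \<forall>x\<in>D. (\<Sum>y\<in>D. B z x y * (\<Sum>w\<in>D. A z y w * v w)) = v x) \<and>
   (\<forall>z\<in>S. \<forall>v. \<forall>x\<in>D. (\<Sum>y\<in>D. A z x y * (\<Sum>w\<in>D. B z y w * v w)) = v x)"
proof -
  define n where "n = card D"
  obtain h where h: "bij_betw h {0..<n} D" using ex_bij_betw_nat_finite[OF fin] n_def by blast
  define hi where "hi = the_inv_into {0..<n} h"
  have hi1: "j < n \<Longrightarrow> hi (h j) = j" for j
    unfolding hi_def using h by (simp add: bij_betw_def the_inv_into_f_f)
  have hi2: "x \<in> D \<Longrightarrow> h (hi x) = x" for x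
    unfolding hi_def using h by (simp add: f_the_inv_into_f_bij_betw)
  have hi3: "x \<in> D \<Longrightarrow> hi x < n" for x
    unfolding hi_def using h by (metis atLeastLessThan_iff bij_betwE bij_betw_the_inv_into)
  have hD: "j < n \<Longrightarrow> h j \<in> D" for j using h by (auto simp: bij_betw_def)
  have re: "(\<Sum>y\<in>D. f y) = (\<Sum>j<n. f (h j))" for f :: "'a \<Rightarrow> complex"
    using sum.reindex_bij_betw[OF h, of f] by (simp add: lessThan_atLeast0)
  define At where "At z i j = A z (h i) (h j)" for z i j
  have injt: "\<forall>j<n. v j = 0" if z: "z \<in> S" and hv: "\<forall>i<n. (\<Sum>j<n. At z i j * v j) = 0" for z v
  proof -
    define w where "w y = v (hi y)" for y
    have "\<forall>x\<in>D. (\<Sum>y\<in>D. A z x y * w y) = 0"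
    proof
      fix x assume x: "x \<in> D"
      have "(\<Sum>y\<in>D. A z x y * w y) = (\<Sum>j<n. At z (hi x) j * v j)"
        unfolding re w_def At_def using hi1 hi2[OF x] by simp
      also have "\<dots> = 0" using hv hi3[OF x] by blast
      finally show "(\<Sum>y\<in>D. A z x y * w y) = 0" .
    qed
    from inj[OF z this] have "\<forall>y\<in>D. w y = 0" .
    then have "w (h j) = 0" if "j < n" for j using hD that by blast
    then show ?thesis unfolding w_def using hi1 by simp
  qed
  obtain Bt where Bt: "\<forall>i j. (\<lambda>z. Bt z i j) holomorphic_on S"
    "\<forall>z\<in>S. \<forall>i<n. \<forall>k<n. (\<Sum>j<n. Bt z i j * At z j k) = (if i = k then 1 else 0)"
    "\<forall>z\<in>S. \<forall>i<n. \<forall>k<n. (\<Sum>j<n. At z i j * Bt z j k) = (if i = k then 1 else 0)"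
  proof -
    have h1: "\<And>i j. (\<lambda>z. At z i j) holomorphic_on S" using hol by (simp add: At_def)
    have "\<exists>B. (\<forall>i j. (\<lambda>z. B z i j) holomorphic_on S) \<and>
   (\<forall>z\<in>S. \<forall>i<n. \<forall>k<n. (\<Sum>j<n. B z i j * At z j k) = (if i = k then 1 else 0)) \<and>
   (\<forall>z\<in>S. \<forall>i<n. \<forall>k<n. (\<Sum>j<n. At z i j * B z j k) = (if i = k then 1 else 0))"
      by (rule inv_holo_nat[OF h1]) (rule injt)
    then show ?thesis using that by blast
  qed
  define B where "B z x y = Bt z (hi x) (hi y)" for z x y
  have "\<forall>x y. (\<lambda>z. B z x y) holomorphic_on S" using Bt(1) unfolding B_def by blast
  moreover have "(\<Sum>y\<in>D. B z x y * (\<Sum>w\<in>D. A z y w * v w)) = v x" if z: "z \<in> S" and x: "x \<in> D" for z v x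
  proof -
    have "(\<Sum>y\<in>D. B z x y * (\<Sum>w\<in>D. A z y w * v w)) = (\<Sum>j<n. Bt z (hi x) j * (\<Sum>l<n. At z j l * v (h l)))"
      unfolding re B_def At_def using hi1 by simp
    also have "\<dots> = (\<Sum>l<n. (\<Sum>j<n. Bt z (hi x) j * At z j l) * v (h l))"
      by (subst sum_distrib_left, subst sum.swap, simp add: sum_distrib_right mult.assoc)
    also have "\<dots> = (\<Sum>l<n. (if hi x = l then 1 else 0) * v (h l))"
      using Bt(2) z hi3[OF x] by simp
    also have "\<dots> = v (h (hi x))" using hi3[OF x] by (subst sum_delta_mult) auto
    finally show ?thesis using hi2[OF x] by simp
  qed
  moreover have "(\<Sum>y\<in>D. A z x y * (\<Sum>w\<in>D. B z y w * v w)) = v x" if z: "z \<in> S" and x: "x \<in> D" for z v x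
  proof -
    have "(\<Sum>y\<in>D. A z x y * (\<Sum>w\<in>D. B z y w * v w)) = (\<Sum>j<n. At z (hi x) j * (\<Sum>l<n. Bt z j l * v (h l)))"
      unfolding re B_def At_def using hi1 hi2[OF x] by simp
    also have "\<dots> = (\<Sum>l<n. (\<Sum>j<n. At z (hi x) j * Bt z j l) * v (h l))"
      by (subst sum_distrib_left, subst sum.swap, simp add: sum_distrib_right mult.assoc)
    also have "\<dots> = (\<Sum>l<n. (if hi x = l then 1 else 0) * v (h l))"
      using Bt(3) z hi3[OF x] by simp
    also have "\<dots> = v (h (hi x))" using hi3[OF x] by (subst sum_delta_mult) auto
    finally show ?thesis using hi2[OF x] by simp
  qed
  ultimately show ?thesis by blast
qed


definition ip :: "'i set \<Rightarrow> ('i \<Rightarrow> complex) \<Rightarrow> ('i \<Rightarrow> complex) \<Rightarrow> complex" where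
  "ip I a b = (\<Sum>x\<in>I. cnj (a x) * b x)"

definition cq :: "'i set \<Rightarrow> ('i \<Rightarrow> 'i \<Rightarrow> real) \<Rightarrow> ('i \<Rightarrow> complex) \<Rightarrow> complex" where
  "cq I S w = ip I w (mv I S w)"

definition qf :: "'i set \<Rightarrow> ('i \<Rightarrow> 'i \<Rightarrow> real) \<Rightarrow> ('i \<Rightarrow> real) \<Rightarrow> real" where
  "qf I S v = (\<Sum>x\<in>I. \<Sum>y\<in>I. v x * S x y * v y)"

lemma qf_nonneg: assumes "spd_on I S" shows "0 \<le> qf I S v" and "qf I S v = 0 \<Longrightarrow> \<forall>x\<in>I. v x = 0"
proof -
  show "0 \<le> qf I S v"
  proof (cases "\<exists>x\<in>I. v x \<noteq> 0")
    case True then show ?thesis using assms unfolding spd_on_def qf_def by (simp add: less_imp_le)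
  next
    case False then show ?thesis unfolding qf_def by simp
  qed
  show "qf I S v = 0 \<Longrightarrow> \<forall>x\<in>I. v x = 0"
    using assms unfolding spd_on_def qf_def by force
qed

lemma cq_expand: "cq I S w = (\<Sum>x\<in>I. \<Sum>y\<in>I. cnj (w x) * of_real (S x y) * w y)"
  by (simp add: cq_def ip_def mv_def sum_distrib_left mult.assoc)

lemma cq_eq: assumes spd: "spd_on I S"
  shows "cq I S w = of_real (qf I S (\<lambda>x. Re (w x)) + qf I S (\<lambda>x. Im (w x)))"
proof -
  have sym: "\<And>x y. x \<in> I \<Longrightarrow> y \<in> I \<Longrightarrow> S x y = S y x" using spd unfolding spd_on_def by blast
  have Re: "Re (cq I S w) = qf I S (\<lambda>x. Re (w x)) + qf I S (\<lambda>x. Im (w x))"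
    unfolding cq_expand qf_def by (simp add: Re_sum sum.distrib[symmetric] algebra_simps)
  have "(\<Sum>x\<in>I. \<Sum>y\<in>I. S x y * Im (w x) * Re (w y)) = (\<Sum>y\<in>I. \<Sum>x\<in>I. S x y * Im (w x) * Re (w y))"
    by (rule sum.swap)
  also have "\<dots> = (\<Sum>x\<in>I. \<Sum>y\<in>I. S x y * Re (w x) * Im (w y))"
    by (intro sum.cong refl) (simp add: sym)
  finally have sw: "(\<Sum>x\<in>I. \<Sum>y\<in>I. S x y * Im (w x) * Re (w y)) = (\<Sum>x\<in>I. \<Sum>y\<in>I. S x y * Re (w x) * Im (w y))" .
  have "Im (cq I S w) = (\<Sum>x\<in>I. \<Sum>y\<in>I. S x y * Re (w x) * Im (w y)) - (\<Sum>x\<in>I. \<Sum>y\<in>I. S x y * Im (w x) * Re (w y))"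
    unfolding cq_expand by (simp add: Im_sum sum_subtractf[symmetric] algebra_simps)
  then have Im: "Im (cq I S w) = 0" using sw by simp
  show ?thesis using Re Im by (simp add: complex_eq_iff)
qed

lemma cq_props: assumes spd: "spd_on I S"
  shows "Im (cq I S w) = 0" "0 \<le> Re (cq I S w)" "Re (cq I S w) = 0 \<Longrightarrow> \<forall>x\<in>I. w x = 0"
proof -
  note e = cq_eq[OF spd, of w]
  show "Im (cq I S w) = 0" using e by simp
  show "0 \<le> Re (cq I S w)" using e qf_nonneg(1)[OF spd] by simp
  assume "Re (cq I S w) = 0"
  then have "qf I S (\<lambda>x. Re (w x)) = 0" "qf I S (\<lambda>x. Im (w x)) = 0"
    using e qf_nonneg(1)[OF spd, of "\<lambda>x. Re (w x)"] qf_nonneg(1)[OF spd, of "\<lambda>x. Im (w x)"] by simp_all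
  then show "\<forall>x\<in>I. w x = 0" using qf_nonneg(2)[OF spd, of "\<lambda>x. Re (w x)"] qf_nonneg(2)[OF spd, of "\<lambda>x. Im (w x)"]
    by (simp add: complex_eq_iff)
qed

lemma cq_inv:
  assumes fin: "finite I" and spd: "spd_on I Sh"
    and inv: "\<And>x y. x \<in> I \<Longrightarrow> y \<in> I \<Longrightarrow> (\<Sum>z\<in>I. Sh x z * Si z y) = (if x = y then 1 else 0)"
  shows "\<And>x. x \<in> I \<Longrightarrow> mv I Sh (mv I Si u) x = u x"
    and "cq I Si u = cq I Sh (mv I Si u)"
proof -
  have sym: "\<And>x y. x \<in> I \<Longrightarrow> y \<in> I \<Longrightarrow> Sh x y = Sh y x" using spd unfolding spd_on_def by blast
  show bk: "mv I Sh (mv I Si u) x = u x" if x: "x \<in> I" for x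
  proof -
    have "mv I Sh (mv I Si u) x = (\<Sum>z\<in>I. \<Sum>y\<in>I. of_real (Sh x z) * (of_real (Si z y) * u y))"
      by (simp add: mv_def sum_distrib_left)
    also have "\<dots> = (\<Sum>y\<in>I. \<Sum>z\<in>I. of_real (Sh x z) * (of_real (Si z y) * u y))" by (rule sum.swap)
    also have "\<dots> = (\<Sum>y\<in>I. of_real (\<Sum>z\<in>I. Sh x z * Si z y) * u y)"
      by (simp add: sum_distrib_right mult.assoc)
    also have "\<dots> = (\<Sum>y\<in>I. if x = y then u y else 0)"
      by (intro sum.cong refl) (simp add: inv[OF x])
    also have "\<dots> = u x" using fin x by (simp add: sum.delta)
    finally show ?thesis .
  qed
  define w where "w = mv I Si u"
  have "cq I Si u = (\<Sum>x\<in>I. cnj (mv I Sh w x) * w x)"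
    unfolding cq_def ip_def w_def using bk by (intro sum.cong refl) simp
  also have "\<dots> = (\<Sum>x\<in>I. \<Sum>z\<in>I. cnj (w z) * of_real (Sh z x) * w x)"
    by (simp add: mv_def sum_distrib_right sum_distrib_left sym mult.commute mult.left_commute)
  also have "\<dots> = (\<Sum>z\<in>I. \<Sum>x\<in>I. cnj (w z) * of_real (Sh z x) * w x)" by (rule sum.swap)
  also have "\<dots> = cq I Sh w" by (simp add: cq_expand)
  finally show "cq I Si u = cq I Sh (mv I Si u)" unfolding w_def .
qed


locale msf =
  fixes Nc m :: nat
    and adj :: "nat \<Rightarrow> nat \<Rightarrow> bool"
    and Kt :: "nat \<Rightarrow> nat \<Rightarrow> nat"
    and L Lh Lhi :: "nat \<Rightarrow> nat \<Rightarrow> (nat \<times> nat) \<Rightarrow> (nat \<times> nat) \<Rightarrow> real"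
  assumes m_pos: "1 \<le> m"
    and adj_sym: "\<And>i j. adj i j \<Longrightarrow> adj j i"
    and adj_irrefl: "\<And>i. \<not> adj i i"
    and Kt_sym: "\<And>i j. adj i j \<Longrightarrow> Kt i j = Kt j i"
    and L_spd: "\<And>i k. i < Nc \<Longrightarrow> 1 \<le> k \<Longrightarrow> k \<le> m \<Longrightarrow> spd_on (bnd Nc adj Kt i) (L i k)"
    and Lh_spd: "\<And>i k. i < Nc \<Longrightarrow> 1 \<le> k \<Longrightarrow> k \<le> m \<Longrightarrow> spd_on (bnd Nc adj Kt i) (Lh i k)"
    and Lhi_inv: "\<And>i k x y. i < Nc \<Longrightarrow> 1 \<le> k \<Longrightarrow> k \<le> m \<Longrightarrow>
        x \<in> bnd Nc adj Kt i \<Longrightarrow> y \<in> bnd Nc adj Kt i \<Longrightarrow>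
        (\<Sum>z\<in>bnd Nc adj Kt i. Lh i k x z * Lhi i k z y) = (if x = y then 1 else 0)"
begin

abbreviation "Bd i \<equiv> bnd Nc adj Kt i"
abbreviation "Iset \<equiv> iface Nc adj Kt"

lemma bnd_iff: "(j,a) \<in> Bd i \<longleftrightarrow> j < Nc \<and> adj i j \<and> a < Kt i j"
  by (simp add: bnd_def)

lemma iface_iff: "(i,j,a) \<in> Iset \<longleftrightarrow> i < Nc \<and> j < Nc \<and> i < j \<and> adj i j \<and> a < Kt i j"
  by (simp add: iface_def)

lemma fin_bnd: "finite (Bd i)"
proof -
  have "Bd i \<subseteq> Sigma {..<Nc} (\<lambda>j. {..<Kt i j})" by (auto simp: bnd_def)
  then show ?thesis by (rule finite_subset) auto
qed

definition D :: "(nat \<times> nat \<times> (nat \<times> nat)) set" where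
  "D = {(i,k,x). i < Nc \<and> 1 \<le> k \<and> k \<le> m \<and> x \<in> Bd i}"

lemma fin_D: "finite D"
proof -
  have "D = Sigma {..<Nc} (\<lambda>i. {1..m} \<times> Bd i)" by (auto simp: D_def)
  then show ?thesis using fin_bnd by auto
qed

lemma fin_If: "finite Iset"
proof -
  have "Iset \<subseteq> Sigma {..<Nc} Bd" by (auto simp: iface_def bnd_def)
  then show ?thesis by (rule finite_subset) (auto intro: fin_bnd)
qed

definition toU :: "(nat \<times> nat \<times> (nat \<times> nat) \<Rightarrow> complex) \<Rightarrow> nat \<Rightarrow> nat \<Rightarrow> (nat \<times> nat) \<Rightarrow> complex" where
  "toU v i k x = (if (i,k,x) \<in> D then v (i,k,x) else 0)"

definition res :: "complex \<Rightarrow> (nat \<Rightarrow> nat \<Rightarrow> (nat \<times> nat) \<Rightarrow> complex) \<Rightarrow> nat \<times> nat \<times> (nat \<times> nat) \<Rightarrow> complex" where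
  "res lam U r = (case r of (i,k,(j,a)) \<Rightarrow>
     if 2 \<le> k then
       mv (Bd i) (L i k) (\<lambda>y. U i (k+1) y - U i k y) (j,a)
     - mv (Bd i) (L i (k-1)) (\<lambda>y. U i k y - U i (k-1) y) (j,a)
     + lam * mv (Bd i) (Lhi i k) (U i k) (j,a)
     else if i < j then
        mv (Bd i) (L i 1) (\<lambda>y. U i 2 y - U i 1 y) (j,a)
      + mv (Bd j) (L j 1) (\<lambda>y. U j 2 y - U j 1 y) (i,a)
      + lam * (mv (Bd i) (Lhi i 1) (U i 1) (j,a)
             + mv (Bd j) (Lhi j 1) (U j 1) (i,a))
     else U j 1 (i,a) - U i 1 (j,a))"

definition G :: "(nat \<times> nat \<times> nat \<Rightarrow> complex) \<Rightarrow> nat \<times> nat \<times> (nat \<times> nat) \<Rightarrow> complex" where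
  "G g r = (case r of (i,k,(j,a)) \<Rightarrow> if k = 1 \<and> i < j then g (i,j,a) else 0)"

lemma solves_iff:
  "msfrom_solves Nc adj Kt m L Lhi lam g U \<longleftrightarrow>
    (\<forall>i k x. (i,k,x) \<notin> D \<longrightarrow> U i k x = 0) \<and> (\<forall>r\<in>D. res lam U r = G g r)"
proof
  assume S: "msfrom_solves Nc adj Kt m L Lhi lam g U"
  note S' = S[unfolded msfrom_solves_def]
  have Z: "\<forall>i k x. (i,k,x) \<notin> D \<longrightarrow> U i k x = 0" using S' by (auto simp: D_def)
  have "res lam U r = G g r" if r: "r \<in> D" for r
  proof -
    obtain i k j a where rr: "r = (i,k,(j,a))" by (cases r) auto
    have i: "i < Nc" and k: "1 \<le> k" "k \<le> m" and x: "(j,a) \<in> Bd i" using r rr by (auto simp: D_def)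
    show ?thesis
    proof (cases "2 \<le> k")
      case True
      then show ?thesis using S' i k x unfolding rr res_def G_def by auto
    next
      case False
      then have k1: "k = 1" using k by simp
      show ?thesis
      proof (cases "i < j")
        case True
        then have "(i,j,a) \<in> Iset" using x i by (simp add: bnd_iff iface_iff)
        then show ?thesis using S' True k1 unfolding rr res_def G_def by fastforce
      next
        case False
        have "j \<noteq> i" using x adj_irrefl by (auto simp: bnd_iff)
        then have "(j,i,a) \<in> Iset" using x i False adj_sym Kt_sym by (auto simp: bnd_iff iface_iff)
        then have "U j 1 (i,a) = U i 1 (j,a)" using S' by fastforce
        then show ?thesis using False k1 unfolding rr res_def G_def by simp
      qed
    qed
  qed
  then show "(\<forall>i k x. (i,k,x) \<notin> D \<longrightarrow> U i k x = 0) \<and> (\<forall>r\<in>D. res lam U r = G g r)" using Z by blast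
next
  assume A: "(\<forall>i k x. (i,k,x) \<notin> D \<longrightarrow> U i k x = 0) \<and> (\<forall>r\<in>D. res lam U r = G g r)"
  then have Z: "\<And>i k x. (i,k,x) \<notin> D \<Longrightarrow> U i k x = 0" and R: "\<And>r. r \<in> D \<Longrightarrow> res lam U r = G g r" by auto
  have 1: "\<forall>i k x. \<not> (i < Nc \<and> 1 \<le> k \<and> k \<le> m \<and> x \<in> Bd i) \<longrightarrow> U i k x = 0"
    using Z by (auto simp: D_def)
  have 2: "\<forall>i<Nc. \<forall>k\<in>{2..m}. \<forall>x\<in>Bd i.
        mv (Bd i) (L i k) (\<lambda>y. U i (k+1) y - U i k y) x
      - mv (Bd i) (L i (k-1)) (\<lambda>y. U i k y - U i (k-1) y) x
      + lam * mv (Bd i) (Lhi i k) (U i k) x = 0"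
  proof (intro allI impI ballI)
    fix i k x assume i: "i < Nc" and k: "k \<in> {2..m}" and x: "x \<in> Bd i"
    obtain j a where xx: "x = (j,a)" by (cases x) auto
    have "(i,k,(j,a)) \<in> D" using i k x xx by (auto simp: D_def)
    from R[OF this] k show "mv (Bd i) (L i k) (\<lambda>y. U i (k+1) y - U i k y) x
      - mv (Bd i) (L i (k-1)) (\<lambda>y. U i k y - U i (k-1) y) x
      + lam * mv (Bd i) (Lhi i k) (U i k) x = 0" unfolding xx res_def G_def by simp
  qed
  have 3: "\<forall>(i,j,a)\<in>Iset.
        mv (Bd i) (L i 1) (\<lambda>y. U i 2 y - U i 1 y) (j,a)
      + mv (Bd j) (L j 1) (\<lambda>y. U j 2 y - U j 1 y) (i,a)
      + lam * (mv (Bd i) (Lhi i 1) (U i 1) (j,a)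
             + mv (Bd j) (Lhi j 1) (U j 1) (i,a)) = g (i,j,a)"
  proof (clarify)
    fix i j a assume t: "(i,j,a) \<in> Iset"
    then have "(i,1,(j,a)) \<in> D" "i < j" using m_pos by (auto simp: D_def iface_iff bnd_iff)
    from R[OF this(1)] this(2) show "mv (Bd i) (L i 1) (\<lambda>y. U i 2 y - U i 1 y) (j,a)
      + mv (Bd j) (L j 1) (\<lambda>y. U j 2 y - U j 1 y) (i,a)
      + lam * (mv (Bd i) (Lhi i 1) (U i 1) (j,a)
             + mv (Bd j) (Lhi j 1) (U j 1) (i,a)) = g (i,j,a)" unfolding res_def G_def by simp
  qed
  have 4: "\<forall>(i,j,a)\<in>Iset. U i 1 (j,a) = U j 1 (i,a)"
  proof (clarify)
    fix i j a assume t: "(i,j,a) \<in> Iset"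
    then have "(j,1,(i,a)) \<in> D" "\<not> j < i" using m_pos adj_sym Kt_sym by (auto simp: D_def iface_iff bnd_iff)
    from R[OF this(1)] this(2) show "U i 1 (j,a) = U j 1 (i,a)" unfolding res_def G_def by simp
  qed
  show "msfrom_solves Nc adj Kt m L Lhi lam g U" unfolding msfrom_solves_def using 1 2 3 4 by blast
qed

end

context msf begin

lemma res_add: "res lam (\<lambda>i k x. U1 i k x + U2 i k x) r = res lam U1 r + res lam U2 r"
  by (cases r) (auto simp: res_def mv_def sum.distrib sum_subtractf algebra_simps split: prod.split)

lemma res_scale: "res lam (\<lambda>i k x. c * U i k x) r = c * res lam U r"
  by (cases r) (auto simp: res_def mv_def sum_distrib_left algebra_simps split: prod.split)

lemma res_zero: "res lam (\<lambda>i k x. 0) r = 0"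
  by (cases r) (auto simp: res_def mv_def split: prod.split)

lemma res_sum: "finite C \<Longrightarrow> res lam (\<lambda>i k x. \<Sum>c\<in>C. f c i k x) r = (\<Sum>c\<in>C. res lam (f c) r)"
proof (induct C rule: finite_induct)
  case empty
  then show ?case using res_zero by simp
next
  case (insert a C)
  have "res lam (\<lambda>i k x. \<Sum>c\<in>insert a C. f c i k x) r = res lam (\<lambda>i k x. f a i k x + (\<Sum>c\<in>C. f c i k x)) r"
    using insert by simp
  also have "\<dots> = res lam (f a) r + res lam (\<lambda>i k x. \<Sum>c\<in>C. f c i k x) r" by (rule res_add)
  finally show ?case using insert by simp
qed

definition Amat :: "complex \<Rightarrow> nat \<times> nat \<times> (nat \<times> nat) \<Rightarrow> nat \<times> nat \<times> (nat \<times> nat) \<Rightarrow> complex" where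
  "Amat lam r c = res lam (toU (\<lambda>d. if d = c then 1 else 0)) r"

lemma toU_decomp: "toU v = (\<lambda>i k x. \<Sum>c\<in>D. v c * toU (\<lambda>d. if d = c then 1 else 0) i k x)"
proof (intro ext)
  fix i k x
  show "toU v i k x = (\<Sum>c\<in>D. v c * toU (\<lambda>d. if d = c then 1 else 0) i k x)"
  proof (cases "(i,k,x) \<in> D")
    case True
    have "(\<Sum>c\<in>D. v c * toU (\<lambda>d. if d = c then 1 else 0) i k x) = (\<Sum>c\<in>D. (if (i,k,x) = c then v c else 0))"
      using True by (intro sum.cong) (auto simp: toU_def)
    also have "\<dots> = v (i,k,x)" using True fin_D by (simp add: sum.delta)
    finally show ?thesis using True by (simp add: toU_def)
  next
    case False
    then show ?thesis by (simp add: toU_def)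
  qed
qed

lemma res_lin: "res lam (toU v) r = (\<Sum>c\<in>D. Amat lam r c * v c)"
proof -
  have "res lam (toU v) r = res lam (\<lambda>i k x. \<Sum>c\<in>D. v c * toU (\<lambda>d. if d = c then 1 else 0) i k x) r"
    by (subst toU_decomp) (rule refl)
  also have "\<dots> = (\<Sum>c\<in>D. res lam (\<lambda>i k x. v c * toU (\<lambda>d. if d = c then 1 else 0) i k x) r)"
    by (rule res_sum[OF fin_D])
  also have "\<dots> = (\<Sum>c\<in>D. Amat lam r c * v c)"
    by (intro sum.cong refl) (simp add: res_scale Amat_def)
  finally show ?thesis .
qed

lemma res_affine: "res lam U r = res 0 U r + lam * (res 1 U r - res 0 U r)"
  by (cases r) (auto simp: res_def algebra_simps split: prod.split)

lemma res_holo: "(\<lambda>lam. res lam U r) holomorphic_on S"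
  by (subst res_affine) (intro holomorphic_intros)

lemma Amat_holo: "(\<lambda>lam. Amat lam r c) holomorphic_on S"
  unfolding Amat_def by (rule res_holo)

lemma G_zero: "G (\<lambda>t. 0) r = 0"
  by (cases r) (auto simp: G_def split: prod.split)

end


lemma ip_add2: "ip I a (\<lambda>x. b x + c x) = ip I a b + ip I a c"
  by (simp add: ip_def sum.distrib algebra_simps)
lemma ip_diff2: "ip I a (\<lambda>x. b x - c x) = ip I a b - ip I a c"
  by (simp add: ip_def sum_subtractf algebra_simps)
lemma ip_scale2: "ip I a (\<lambda>x. c * b x) = c * ip I a b"
  by (simp add: ip_def sum_distrib_left algebra_simps)
lemma ip_diff1: "ip I (\<lambda>x. a x - b x) c = ip I a c - ip I b c"
  by (simp add: ip_def sum_subtractf algebra_simps)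
lemma ip_cong: "(\<And>x. x \<in> I \<Longrightarrow> a x = a' x) \<Longrightarrow> (\<And>x. x \<in> I \<Longrightarrow> b x = b' x) \<Longrightarrow> ip I a b = ip I a' b'"
  by (simp add: ip_def)
lemma ip_zero1: "(\<And>x. x \<in> I \<Longrightarrow> a x = 0) \<Longrightarrow> ip I a b = 0"
  by (simp add: ip_def)
lemma ip_zero2: "(\<And>x. x \<in> I \<Longrightarrow> b x = 0) \<Longrightarrow> ip I a b = 0"
  by (simp add: ip_def)

context msf begin

lemma sbp:
  assumes Z: "\<And>i k x. (i,k,x) \<notin> D \<Longrightarrow> U i k x = 0"
    and E: "\<forall>k\<in>{2..m}. \<forall>x\<in>Bd i.
        mv (Bd i) (L i k) (\<lambda>y. U i (k+1) y - U i k y) x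
      - mv (Bd i) (L i (k-1)) (\<lambda>y. U i k y - U i (k-1) y) x
      + lam * mv (Bd i) (Lhi i k) (U i k) x = 0"
  shows "ip (Bd i) (U i 1) (\<lambda>x. mv (Bd i) (L i 1) (\<lambda>y. U i 2 y - U i 1 y) x + lam * mv (Bd i) (Lhi i 1) (U i 1) x)
    = lam * (\<Sum>k\<in>{1..m}. cq (Bd i) (Lhi i k) (U i k)) - (\<Sum>k\<in>{1..m}. cq (Bd i) (L i k) (\<lambda>y. U i (k+1) y - U i k y))"
proof -
  define d where "d k = (\<lambda>y. U i (k+1) y - U i k y)" for k
  define T where "T k = ip (Bd i) (U i k) (mv (Bd i) (L i k) (d k))" for k
  define Sx where "Sx k = ip (Bd i) (U i (k+1)) (mv (Bd i) (L i k) (d k))" for k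
  define H where "H k = cq (Bd i) (Lhi i k) (U i k)" for k
  define Qk where "Qk k = cq (Bd i) (L i k) (d k)" for k
  obtain p where mp: "m = Suc p" using m_pos by (cases m) auto
  have lhs: "ip (Bd i) (U i 1) (\<lambda>x. mv (Bd i) (L i 1) (\<lambda>y. U i 2 y - U i 1 y) x + lam * mv (Bd i) (Lhi i 1) (U i 1) x)
     = T 1 + lam * H 1"
    unfolding T_def H_def d_def cq_def by (simp add: ip_add2 ip_scale2 numeral_2_eq_2)
  have int: "T k - Sx (k-1) + lam * H k = 0" if k: "k \<in> {2..m}" for k
  proof -
    have "ip (Bd i) (U i k) (\<lambda>x. mv (Bd i) (L i k) (\<lambda>y. U i (k+1) y - U i k y) x
      - mv (Bd i) (L i (k-1)) (\<lambda>y. U i k y - U i (k-1) y) x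
      + lam * mv (Bd i) (Lhi i k) (U i k) x) = 0"
      using E k by (intro ip_zero2) auto
    moreover have "k - 1 + 1 = k" using k by simp
    ultimately show ?thesis unfolding T_def Sx_def H_def d_def cq_def
      by (simp add: ip_add2 ip_diff2 ip_scale2)
  qed
  have qk: "Qk k = Sx k - T k" for k
    unfolding Qk_def Sx_def T_def cq_def d_def by (simp add: ip_diff1)
  have sm: "Sx m = 0"
    unfolding Sx_def by (rule ip_zero1) (rule Z, simp add: D_def)
  have s1: "sum f {1..m} = f 1 + sum f {2..m}" for f :: "nat \<Rightarrow> complex"
    using sum.atLeast_Suc_atMost[of 1 m f] m_pos by (simp add: numeral_2_eq_2)
  have s2: "(\<Sum>k\<in>{2..m}. Sx (k-1)) = (\<Sum>k\<in>{1..p}. Sx k)"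
  proof -
    have e: "{2..m} = {Suc 1..Suc p}" using mp by (simp add: numeral_2_eq_2)
    have "(\<Sum>k\<in>{Suc 1..Suc p}. Sx (k-1)) = (\<Sum>k\<in>{1..p}. Sx (Suc k - 1))"
      by (rule sum.shift_bounds_cl_Suc_ivl)
    also have "\<dots> = (\<Sum>k\<in>{1..p}. Sx k)" by simp
    finally show ?thesis unfolding e .
  qed
  have s3: "(\<Sum>k\<in>{1..m}. Sx k) = (\<Sum>k\<in>{1..p}. Sx k)"
    using sm mp by (simp add: sum.cl_ivl_Suc)
  have z: "(\<Sum>k\<in>{2..m}. T k) - (\<Sum>k\<in>{2..m}. Sx (k-1)) + lam * (\<Sum>k\<in>{2..m}. H k) = 0"
  proof -
    have "(\<Sum>k\<in>{2..m}. T k - Sx (k-1) + lam * H k) = 0" using int by simp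
    then show ?thesis by (simp add: sum.distrib sum_subtractf sum_distrib_left)
  qed
  have "(\<Sum>k\<in>{1..m}. Qk k) = (\<Sum>k\<in>{1..m}. Sx k) - (\<Sum>k\<in>{1..m}. T k)"
    by (simp add: qk sum_subtractf)
  then have qsum: "(\<Sum>k\<in>{1..m}. Qk k) = (\<Sum>k\<in>{1..p}. Sx k) - T 1 - (\<Sum>k\<in>{2..m}. T k)"
    using s3 s1[of T] by simp
  have hsum: "(\<Sum>k\<in>{1..m}. H k) = H 1 + (\<Sum>k\<in>{2..m}. H k)" by (rule s1)
  have "T 1 + lam * H 1 = lam * (\<Sum>k\<in>{1..m}. H k) - (\<Sum>k\<in>{1..m}. Qk k)"
    using z s2 unfolding qsum hsum by (simp add: algebra_simps)
  then show ?thesis using lhs unfolding H_def Qk_def d_def by simp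
qed

end

lemma sum_nn0: fixes f :: "'a \<Rightarrow> real"
  shows "finite A \<Longrightarrow> (\<And>x. x \<in> A \<Longrightarrow> 0 \<le> f x) \<Longrightarrow> sum f A = 0 \<Longrightarrow> x \<in> A \<Longrightarrow> f x = 0"
  by (simp add: sum_nonneg_eq_0_iff)

context msf begin

definition Pe :: "(nat \<Rightarrow> nat \<Rightarrow> (nat \<times> nat) \<Rightarrow> complex) \<Rightarrow> complex" where
  "Pe U = (\<Sum>i<Nc. \<Sum>k\<in>{1..m}. cq (Bd i) (Lhi i k) (U i k))"
definition Qe :: "(nat \<Rightarrow> nat \<Rightarrow> (nat \<times> nat) \<Rightarrow> complex) \<Rightarrow> complex" where
  "Qe U = (\<Sum>i<Nc. \<Sum>k\<in>{1..m}. cq (Bd i) (L i k) (\<lambda>y. U i (k+1) y - U i k y))"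

lemma Lhi_cq:
  assumes "i < Nc" "1 \<le> k" "k \<le> m"
  shows "Im (cq (Bd i) (Lhi i k) u) = 0" "0 \<le> Re (cq (Bd i) (Lhi i k) u)"
    "Re (cq (Bd i) (Lhi i k) u) = 0 \<Longrightarrow> \<forall>x\<in>Bd i. u x = 0"
proof -
  have spd: "spd_on (Bd i) (Lh i k)" using Lh_spd assms by blast
  have inv: "\<And>x y. x \<in> Bd i \<Longrightarrow> y \<in> Bd i \<Longrightarrow> (\<Sum>z\<in>Bd i. Lh i k x z * Lhi i k z y) = (if x = y then 1 else 0)"
    using Lhi_inv assms by blast
  note ci = cq_inv[OF fin_bnd spd inv]
  have e: "cq (Bd i) (Lhi i k) u = cq (Bd i) (Lh i k) (mv (Bd i) (Lhi i k) u)" by (rule ci(2))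
  show "Im (cq (Bd i) (Lhi i k) u) = 0" unfolding e by (rule cq_props(1)[OF spd])
  show "0 \<le> Re (cq (Bd i) (Lhi i k) u)" unfolding e by (rule cq_props(2)[OF spd])
  assume "Re (cq (Bd i) (Lhi i k) u) = 0"
  then have "\<forall>x\<in>Bd i. mv (Bd i) (Lhi i k) u x = 0" unfolding e by (rule cq_props(3)[OF spd])
  then have "\<forall>x\<in>Bd i. mv (Bd i) (Lh i k) (mv (Bd i) (Lhi i k) u) x = 0"
    by (simp add: mv_def)
  then show "\<forall>x\<in>Bd i. u x = 0" using ci(1) by simp
qed

lemma L_cq:
  assumes "i < Nc" "1 \<le> k" "k \<le> m"
  shows "Im (cq (Bd i) (L i k) u) = 0" "0 \<le> Re (cq (Bd i) (L i k) u)"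
    "Re (cq (Bd i) (L i k) u) = 0 \<Longrightarrow> \<forall>x\<in>Bd i. u x = 0"
  using cq_props[OF L_spd[OF assms]] by auto

lemma Pe_props:
  shows "Im (Pe U) = 0" "0 \<le> Re (Pe U)"
    "Re (Pe U) = 0 \<Longrightarrow> \<forall>i<Nc. \<forall>k\<in>{1..m}. \<forall>x\<in>Bd i. U i k x = 0"
proof -
  show "Im (Pe U) = 0" unfolding Pe_def by (simp add: Im_sum Lhi_cq(1))
  have nn: "\<And>i k. i < Nc \<Longrightarrow> k \<in> {1..m} \<Longrightarrow> 0 \<le> Re (cq (Bd i) (Lhi i k) (U i k))"
    using Lhi_cq(2) by auto
  have nn2: "\<And>i. i \<in> {..<Nc} \<Longrightarrow> 0 \<le> (\<Sum>k\<in>{1..m}. Re (cq (Bd i) (Lhi i k) (U i k)))"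
    by (rule sum_nonneg) (rule nn, auto)
  show "0 \<le> Re (Pe U)" unfolding Pe_def Re_sum by (rule sum_nonneg) (rule nn2)
  assume "Re (Pe U) = 0"
  then have "(\<Sum>i<Nc. \<Sum>k\<in>{1..m}. Re (cq (Bd i) (Lhi i k) (U i k))) = 0"
    unfolding Pe_def by (simp add: Re_sum)
  then have s0: "\<forall>i\<in>{..<Nc}. (\<Sum>k\<in>{1..m}. Re (cq (Bd i) (Lhi i k) (U i k))) = 0"
    using sum_nn0[where f="\<lambda>i. \<Sum>k\<in>{1..m}. Re (cq (Bd i) (Lhi i k) (U i k))", OF finite_lessThan nn2] by blast
  have "Re (cq (Bd i) (Lhi i k) (U i k)) = 0" if i: "i < Nc" and k: "k \<in> {1..m}" for i k
  proof -
    have "(\<Sum>k\<in>{1..m}. Re (cq (Bd i) (Lhi i k) (U i k))) = 0" using s0 i by blast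
    moreover have "\<And>k. k \<in> {1..m} \<Longrightarrow> 0 \<le> Re (cq (Bd i) (Lhi i k) (U i k))" using nn i by blast
    ultimately show ?thesis using sum_nn0[where f="\<lambda>k. Re (cq (Bd i) (Lhi i k) (U i k))", OF finite_atLeastAtMost] k by blast
  qed
  then show "\<forall>i<Nc. \<forall>k\<in>{1..m}. \<forall>x\<in>Bd i. U i k x = 0"
    using Lhi_cq(3) by auto
qed

lemma Qe_props:
  shows "Im (Qe U) = 0" "0 \<le> Re (Qe U)"
    "Re (Qe U) = 0 \<Longrightarrow> \<forall>i<Nc. \<forall>k\<in>{1..m}. \<forall>x\<in>Bd i. U i (k+1) x - U i k x = 0"
proof -
  show "Im (Qe U) = 0" unfolding Qe_def by (simp add: Im_sum L_cq(1))
  have nn: "\<And>i k. i < Nc \<Longrightarrow> k \<in> {1..m} \<Longrightarrow> 0 \<le> Re (cq (Bd i) (L i k) (\<lambda>y. U i (k+1) y - U i k y))"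
    using L_cq(2) by auto
  have nn2: "\<And>i. i \<in> {..<Nc} \<Longrightarrow> 0 \<le> (\<Sum>k\<in>{1..m}. Re (cq (Bd i) (L i k) (\<lambda>y. U i (k+1) y - U i k y)))"
    by (rule sum_nonneg) (rule nn, auto)
  show "0 \<le> Re (Qe U)" unfolding Qe_def Re_sum by (rule sum_nonneg) (rule nn2)
  assume "Re (Qe U) = 0"
  then have "(\<Sum>i<Nc. \<Sum>k\<in>{1..m}. Re (cq (Bd i) (L i k) (\<lambda>y. U i (k+1) y - U i k y))) = 0"
    unfolding Qe_def by (simp add: Re_sum)
  then have s0: "\<forall>i\<in>{..<Nc}. (\<Sum>k\<in>{1..m}. Re (cq (Bd i) (L i k) (\<lambda>y. U i (k+1) y - U i k y))) = 0"
    using sum_nn0[where f="\<lambda>i. \<Sum>k\<in>{1..m}. Re (cq (Bd i) (L i k) (\<lambda>y. U i (k+1) y - U i k y))", OF finite_lessThan nn2] by blast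
  have "Re (cq (Bd i) (L i k) (\<lambda>y. U i (k+1) y - U i k y)) = 0" if i: "i < Nc" and k: "k \<in> {1..m}" for i k
  proof -
    have "(\<Sum>k\<in>{1..m}. Re (cq (Bd i) (L i k) (\<lambda>y. U i (k+1) y - U i k y))) = 0" using s0 i by blast
    moreover have "\<And>k. k \<in> {1..m} \<Longrightarrow> 0 \<le> Re (cq (Bd i) (L i k) (\<lambda>y. U i (k+1) y - U i k y))" using nn i by blast
    ultimately show ?thesis using sum_nn0[where f="\<lambda>k. Re (cq (Bd i) (L i k) (\<lambda>y. U i (k+1) y - U i k y))", OF finite_atLeastAtMost] k by blast
  qed
  then have R: "\<And>i k. i < Nc \<Longrightarrow> k \<in> {1..m} \<Longrightarrow> Re (cq (Bd i) (L i k) (\<lambda>y. U i (k+1) y - U i k y)) = 0" .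
  show "\<forall>i<Nc. \<forall>k\<in>{1..m}. \<forall>x\<in>Bd i. U i (k+1) x - U i k x = 0"
  proof (intro allI impI ballI)
    fix i k x assume i: "i < Nc" and k: "k \<in> {1..m}" and x: "x \<in> Bd i"
    have "\<forall>x\<in>Bd i. (\<lambda>y. U i (k+1) y - U i k y) x = 0"
      using L_cq(3)[of i k "\<lambda>y. U i (k+1) y - U i k y"] R[OF i k] i k by auto
    then show "U i (k+1) x - U i k x = 0" using x by blast
  qed
qed

lemma Qe_zero:
  assumes Z: "\<And>i k x. (i,k,x) \<notin> D \<Longrightarrow> U i k x = 0" and q: "Re (Qe U) = 0"
  shows "\<forall>i k x. U i k x = 0"
proof (intro allI)
  fix i k x
  show "U i k x = 0"
  proof (cases "(i,k,x) \<in> D")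
    case False then show ?thesis using Z by blast
  next
    case True
    then have i: "i < Nc" and x: "x \<in> Bd i" and k: "1 \<le> k" "k \<le> m" by (auto simp: D_def)
    have step: "\<And>k. k \<in> {1..m} \<Longrightarrow> U i k x = U i (k+1) x" using Qe_props(3)[OF q] i x by auto
    have "j \<le> m \<Longrightarrow> U i (m + 1 - j) x = 0" for j
    proof (induct j)
      case 0 then show ?case using Z by (simp add: D_def)
    next
      case (Suc j)
      then have "U i (m + 1 - Suc j) x = U i (m + 1 - Suc j + 1) x" by (intro step) auto
      also have "m + 1 - Suc j + 1 = m + 1 - j" using Suc by simp
      finally show ?case using Suc by simp
    qed
    from this[of "m + 1 - k"] k show ?thesis by simp
  qed
qed

end

context msf begin

definition swp :: "nat \<times> nat \<times> nat \<Rightarrow> nat \<times> nat \<times> nat" where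
  "swp t = (case t of (i,j,a) \<Rightarrow> (j,i,a))"

lemma Sigma_split: "Sigma {..<Nc} Bd = Iset \<union> swp ` Iset"
proof
  show "Sigma {..<Nc} Bd \<subseteq> Iset \<union> swp ` Iset"
  proof
    fix p assume p: "p \<in> Sigma {..<Nc} Bd"
    obtain i j a where pp: "p = (i,j,a)" by (cases p) auto
    have h: "i < Nc" "j < Nc" "adj i j" "a < Kt i j" using p pp by (auto simp: bnd_iff)
    have ne: "i \<noteq> j" using h(3) adj_irrefl by auto
    show "p \<in> Iset \<union> swp ` Iset"
    proof (cases "i < j")
      case True then show ?thesis using h pp by (simp add: iface_iff)
    next
      case False
      then have "(j,i,a) \<in> Iset" using h ne adj_sym Kt_sym by (simp add: iface_iff)
      moreover have "p = swp (j,i,a)" using pp by (simp add: swp_def)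
      ultimately show ?thesis by blast
    qed
  qed
next
  show "Iset \<union> swp ` Iset \<subseteq> Sigma {..<Nc} Bd"
    using adj_sym Kt_sym by (auto simp: iface_def bnd_def swp_def)
qed

lemma swp_disj: "Iset \<inter> swp ` Iset = {}"
  by (auto simp: iface_def swp_def)

lemma swp_inj: "inj_on swp Iset"
  by (auto simp: inj_on_def swp_def)

lemma energy:
  assumes S: "msfrom_solves Nc adj Kt m L Lhi lam g U"
  shows "(\<Sum>t\<in>Iset. cnj (msfrom_output U t) * g t) = lam * Pe U - Qe U"
proof -
  have Z: "\<And>i k x. (i,k,x) \<notin> D \<Longrightarrow> U i k x = 0" using S solves_iff by blast
  note S' = S[unfolded msfrom_solves_def]
  have E: "\<forall>k\<in>{2..m}. \<forall>x\<in>Bd i.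
        mv (Bd i) (L i k) (\<lambda>y. U i (k+1) y - U i k y) x
      - mv (Bd i) (L i (k-1)) (\<lambda>y. U i k y - U i (k-1) y) x
      + lam * mv (Bd i) (Lhi i k) (U i k) x = 0" if "i < Nc" for i
    using S' that by blast
  have IFc: "mv (Bd i) (L i 1) (\<lambda>y. U i 2 y - U i 1 y) (j,a)
      + mv (Bd j) (L j 1) (\<lambda>y. U j 2 y - U j 1 y) (i,a)
      + lam * (mv (Bd i) (Lhi i 1) (U i 1) (j,a)
             + mv (Bd j) (Lhi j 1) (U j 1) (i,a)) = g (i,j,a)" if "(i,j,a) \<in> Iset" for i j a
    using S' that by fastforce
  have C: "U i 1 (j,a) = U j 1 (i,a)" if "(i,j,a) \<in> Iset" for i j a
    using S' that by fastforce
  define fl where "fl i x = mv (Bd i) (L i 1) (\<lambda>y. U i 2 y - U i 1 y) x + lam * mv (Bd i) (Lhi i 1) (U i 1) x" for i x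
  have per: "ip (Bd i) (U i 1) (fl i) = lam * (\<Sum>k\<in>{1..m}. cq (Bd i) (Lhi i k) (U i k))
       - (\<Sum>k\<in>{1..m}. cq (Bd i) (L i k) (\<lambda>y. U i (k+1) y - U i k y))" if "i < Nc" for i
    unfolding fl_def by (rule sbp[where U=U, OF Z E[OF that]])
  have sumi: "(\<Sum>i<Nc. ip (Bd i) (U i 1) (fl i)) = lam * Pe U - Qe U"
  proof -
    have "(\<Sum>i<Nc. ip (Bd i) (U i 1) (fl i)) = (\<Sum>i<Nc. lam * (\<Sum>k\<in>{1..m}. cq (Bd i) (Lhi i k) (U i k))
       - (\<Sum>k\<in>{1..m}. cq (Bd i) (L i k) (\<lambda>y. U i (k+1) y - U i k y)))"
      by (rule sum.cong[OF refl], rule per, simp)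
    then show ?thesis by (simp add: Pe_def Qe_def sum_subtractf sum_distrib_left)
  qed
  define f where "f p = (case p of (i,x) \<Rightarrow> cnj (U i 1 x) * fl i x)" for p
  have "(\<Sum>i<Nc. ip (Bd i) (U i 1) (fl i)) = (\<Sum>i<Nc. \<Sum>x\<in>Bd i. f (i,x))"
    by (simp add: ip_def f_def)
  also have "\<dots> = (\<Sum>(i,x)\<in>Sigma {..<Nc} Bd. f (i,x))"
    by (rule sum.Sigma) (auto intro: fin_bnd)
  also have "\<dots> = (\<Sum>p\<in>Sigma {..<Nc} Bd. f p)" by (simp add: case_prod_beta')
  also have "\<dots> = (\<Sum>p\<in>Iset. f p) + (\<Sum>p\<in>swp ` Iset. f p)"
    unfolding Sigma_split by (rule sum.union_disjoint) (auto intro: fin_If simp: swp_disj)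
  also have "(\<Sum>p\<in>swp ` Iset. f p) = (\<Sum>p\<in>Iset. f (swp p))"
    by (rule sum.reindex[OF swp_inj, unfolded comp_def])
  also have "(\<Sum>p\<in>Iset. f p) + (\<Sum>p\<in>Iset. f (swp p)) = (\<Sum>t\<in>Iset. cnj (msfrom_output U t) * g t)"
    unfolding sum.distrib[symmetric]
  proof (rule sum.cong[OF refl])
    fix t assume t: "t \<in> Iset"
    obtain i j a where tt: "t = (i,j,a)" by (cases t) auto
    have "f t + f (swp t) = cnj (U i 1 (j,a)) * (fl i (j,a) + fl j (i,a))"
      using C[OF t[unfolded tt]] unfolding tt f_def swp_def by (simp add: algebra_simps)
    also have "fl i (j,a) + fl j (i,a) = g (i,j,a)"
      using IFc[OF t[unfolded tt]] unfolding fl_def by (simp add: algebra_simps)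
    finally show "f t + f (swp t) = cnj (msfrom_output U t) * g t"
      unfolding tt msfrom_output_def by simp
  qed
  finally show ?thesis using sumi by simp
qed

lemma zero_sol:
  assumes lam: "lam \<notin> pos_ray" and S: "msfrom_solves Nc adj Kt m L Lhi lam (\<lambda>t. 0) U"
  shows "\<forall>i k x. U i k x = 0"
proof -
  have Z: "\<And>i k x. (i,k,x) \<notin> D \<Longrightarrow> U i k x = 0" using S solves_iff by blast
  have e: "lam * Pe U - Qe U = 0" using energy[OF S] by simp
  define p where "p = Re (Pe U)"
  define q where "q = Re (Qe U)"
  have P: "Pe U = of_real p" using Pe_props(1) unfolding p_def by (simp add: complex_eq_iff)
  have Q: "Qe U = of_real q" using Qe_props(1) unfolding q_def by (simp add: complex_eq_iff)
  have p0: "0 \<le> p" and q0: "0 \<le> q" unfolding p_def q_def using Pe_props(2) Qe_props(2) by auto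
  show ?thesis
  proof (cases "q = 0")
    case True
    then show ?thesis using Qe_zero[where U=U, OF Z] unfolding q_def by blast
  next
    case False
    then have qp: "q > 0" using q0 by simp
    have lp: "lam * of_real p = of_real q" using e P Q by simp
    then have "p \<noteq> 0" using False by auto
    then have pp: "p > 0" using p0 by simp
    then have "lam = of_real (q / p)" using lp by (simp add: field_simps)
    moreover have "q / p > 0" using qp pp by simp
    ultimately have "lam \<in> pos_ray" unfolding pos_ray_def by blast
    with lam show ?thesis by blast
  qed
qed

end


definition form :: "'i set \<Rightarrow> ('i \<Rightarrow> 'i \<Rightarrow> complex) \<Rightarrow> ('i \<Rightarrow> complex) \<Rightarrow> complex" where
  "form I M w = (\<Sum>x\<in>I. \<Sum>y\<in>I. cnj (w x) * M x y * w y)"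

lemma form_mat_Im: "form I (mat_Im M) w = of_real (Im (form I M w))"
proof -
  define q where "q = form I M w"
  have "form I (mat_Im M) w = (\<Sum>x\<in>I. \<Sum>y\<in>I. (cnj (w x) * M x y * w y - cnj (w x) * cnj (M y x) * w y) / (2 * \<i>))"
    unfolding form_def by (intro sum.cong refl) (simp add: mat_Im_def field_simps)
  also have "\<dots> = (q - (\<Sum>x\<in>I. \<Sum>y\<in>I. cnj (w x) * cnj (M y x) * w y)) / (2 * \<i>)"
    unfolding q_def form_def by (simp only: sum_divide_distrib[symmetric] sum_subtractf)
  also have "(\<Sum>x\<in>I. \<Sum>y\<in>I. cnj (w x) * cnj (M y x) * w y) = cnj (\<Sum>y\<in>I. \<Sum>x\<in>I. cnj (w y) * M y x * w x)"
    by (subst sum.swap) (simp add: mult.commute mult.left_commute)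
  also have "(\<Sum>y\<in>I. \<Sum>x\<in>I. cnj (w y) * M y x * w x) = q" unfolding q_def form_def by simp
  also have "(q - cnj q) / (2 * \<i>) = of_real (Im q)" by (simp add: complex_eq_iff)
  finally show ?thesis unfolding q_def .
qed

lemma mat_Im_herm: "mat_Im M y x = cnj (mat_Im M x y)"
proof -
  have "cnj (mat_Im M x y) = (cnj (M x y) - M y x) / cnj (2 * \<i>)"
    by (simp only: mat_Im_def complex_cnj_divide complex_cnj_diff complex_cnj_cnj)
  also have "cnj (2 * \<i>) = - (2 * \<i>)" by simp
  also have "(cnj (M x y) - M y x) / - (2 * \<i>) = (M y x - cnj (M x y)) / (2 * \<i>)"
    by (simp only: divide_minus_right minus_divide_left minus_diff_eq)
  finally show ?thesis by (simp only: mat_Im_def)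
qed

lemma pd_psd: assumes hp: "herm_pd I M" shows "herm_psd I M"
proof -
  have H: "\<forall>x\<in>I. \<forall>y\<in>I. M y x = cnj (M x y)"
    using hp unfolding herm_pd_def by (rule conjunct1)
  have P0: "\<forall>v. (\<exists>x\<in>I. v x \<noteq> 0) \<longrightarrow> 0 < Re (\<Sum>x\<in>I. \<Sum>y\<in>I. cnj (v x) * M x y * v y)"
    using hp unfolding herm_pd_def by (rule conjunct2)
  have "0 \<le> Re (\<Sum>x\<in>I. \<Sum>y\<in>I. cnj (v x) * M x y * v y)" for v
  proof (cases "\<exists>x\<in>I. v x \<noteq> 0")
    case True
    have "0 < Re (\<Sum>x\<in>I. \<Sum>y\<in>I. cnj (v x) * M x y * v y)" using P0 True by blast
    then show ?thesis by (rule less_imp_le)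
  next
    case False
    then have z: "\<And>x. x \<in> I \<Longrightarrow> v x = 0" by blast
    have "(\<Sum>x\<in>I. \<Sum>y\<in>I. cnj (v x) * M x y * v y) = 0" by (rule sum.neutral) (simp add: z)
    then show ?thesis by simp
  qed
  then show ?thesis unfolding herm_psd_def using H by blast
qed

lemma sum_one: "finite I \<Longrightarrow> x \<in> I \<Longrightarrow> (\<And>u. u \<in> I \<Longrightarrow> u \<noteq> x \<Longrightarrow> h u = 0) \<Longrightarrow> sum h I = h x"
proof -
  assume a: "finite I" "x \<in> I" "\<And>u. u \<in> I \<Longrightarrow> u \<noteq> x \<Longrightarrow> h u = 0"
  have "sum h I = sum h {x}" by (rule sum.mono_neutral_right) (use a in auto)
  then show ?thesis by simp
qed
lemma sum_two: "finite I \<Longrightarrow> x \<in> I \<Longrightarrow> y \<in> I \<Longrightarrow> x \<noteq> y \<Longrightarrow>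
   (\<And>u. u \<in> I \<Longrightarrow> u \<noteq> x \<Longrightarrow> u \<noteq> y \<Longrightarrow> h u = 0) \<Longrightarrow> sum h I = h x + h y"
proof -
  assume a: "finite I" "x \<in> I" "y \<in> I" "x \<noteq> y" "\<And>u. u \<in> I \<Longrightarrow> u \<noteq> x \<Longrightarrow> u \<noteq> y \<Longrightarrow> h u = 0"
  have "sum h I = sum h {x,y}" by (rule sum.mono_neutral_right) (use a in auto)
  then show ?thesis using a(4) by simp
qed

lemma form_one: assumes fin: "finite I" and x: "x \<in> I"
  shows "form I M (\<lambda>z. if z = x then 1 else 0) = M x x"
proof -
  define w where "w = (\<lambda>z. if z = x then (1::complex) else 0)"
  have inner: "(\<Sum>v\<in>I. cnj (w u) * M u v * w v) = cnj (w u) * M u x * w x" for u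
    by (rule sum_one[OF fin x]) (simp add: w_def)
  have "form I M w = (\<Sum>u\<in>I. cnj (w u) * M u x * w x)" unfolding form_def inner ..
  also have "\<dots> = cnj (w x) * M x x * w x" by (rule sum_one[OF fin x]) (simp add: w_def)
  finally show ?thesis by (simp add: w_def)
qed

lemma form_two: assumes fin: "finite I" and xy: "x \<in> I" "y \<in> I" "x \<noteq> y"
  shows "form I M (\<lambda>z. if z = x then \<alpha> else if z = y then \<beta> else 0) =
    cnj \<alpha> * M x x * \<alpha> + cnj \<alpha> * M x y * \<beta> + cnj \<beta> * M y x * \<alpha> + cnj \<beta> * M y y * \<beta>"
proof -
  define w where "w = (\<lambda>z. if z = x then \<alpha> else if z = y then \<beta> else 0)"
  have inner: "(\<Sum>v\<in>I. cnj (w u) * M u v * w v) = cnj (w u) * M u x * \<alpha> + cnj (w u) * M u y * \<beta>" for u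
    by (subst sum_two[OF fin xy]) (simp_all add: w_def xy(3) not_sym[OF xy(3)])
  have "form I M w = (\<Sum>u\<in>I. cnj (w u) * M u x * \<alpha> + cnj (w u) * M u y * \<beta>)"
    unfolding form_def inner ..
  also have "\<dots> = (cnj (w x) * M x x * \<alpha> + cnj (w x) * M x y * \<beta>) + (cnj (w y) * M y x * \<alpha> + cnj (w y) * M y y * \<beta>)"
    by (subst sum_two[OF fin xy]) (simp_all add: w_def xy(3) not_sym[OF xy(3)])
  finally show ?thesis by (simp add: w_def xy(3) not_sym[OF xy(3)])
qed

lemma polar:
  assumes fin: "finite I" and h: "\<And>w. Im (form I M w) = 0" and x: "x \<in> I" and y: "y \<in> I"
  shows "M y x = cnj (M x y)"
proof -
  have d: "Im (M z z) = 0" if "z \<in> I" for z using h[of "\<lambda>u. if u = z then 1 else 0"] form_one[OF fin that] by simp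
  show ?thesis
  proof (cases "x = y")
    case True then show ?thesis using d[OF x] by (simp add: complex_eq_iff)
  next
    case False
    have a: "Im (M x y) + Im (M y x) = 0"
      using h[of "\<lambda>z. if z = x then 1 else if z = y then 1 else 0"] form_two[OF fin x y False, of M 1 1] d[OF x] d[OF y] by simp
    have b: "Re (M x y) - Re (M y x) = 0"
      using h[of "\<lambda>z. if z = x then 1 else if z = y then \<i> else 0"] form_two[OF fin x y False, of M 1 \<i>] d[OF x] d[OF y] by simp
    show ?thesis using a b by (simp add: complex_eq_iff)
  qed
qed


context msf begin

definition col :: "nat \<times> nat \<times> nat \<Rightarrow> nat \<times> nat \<times> (nat \<times> nat)" where
  "col t = (fst t, 1, snd t)"

lemma col_inj: "inj_on col Iset" by (auto simp: inj_on_def col_def prod_eq_iff)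

lemma col_D: "t \<in> Iset \<Longrightarrow> col t \<in> D"
  using m_pos by (cases t) (auto simp: col_def D_def iface_iff bnd_iff)

lemma G_col: "t \<in> Iset \<Longrightarrow> G g (col t) = g t"
  by (cases t) (auto simp: col_def G_def iface_iff)

lemma reindex_G: "(\<Sum>c\<in>D. h c * G g c) = (\<Sum>s\<in>Iset. h (col s) * g s)"
proof -
  have "(\<Sum>c\<in>D. h c * G g c) = (\<Sum>c\<in>col ` Iset. h c * G g c)"
  proof (rule sum.mono_neutral_right[OF fin_D])
    show "col ` Iset \<subseteq> D" using col_D by blast
    show "\<forall>c\<in>D - col ` Iset. h c * G g c = 0"
    proof
      fix c assume c: "c \<in> D - col ` Iset"
      obtain i k j a where cc: "c = (i,k,(j,a))" by (cases c) auto
      show "h c * G g c = 0"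
      proof (cases "k = 1 \<and> i < j")
        case True
        then have "(i,j,a) \<in> Iset" using c cc by (auto simp: D_def bnd_iff iface_iff)
        moreover have "c = col (i,j,a)" using cc True by (simp add: col_def)
        ultimately show ?thesis using c by blast
      next
        case False then show ?thesis by (auto simp: cc G_def)
      qed
    qed
  qed
  also have "\<dots> = (\<Sum>s\<in>Iset. h (col s) * G g (col s))"
    by (rule sum.reindex[OF col_inj, unfolded comp_def])
  also have "\<dots> = (\<Sum>s\<in>Iset. h (col s) * g s)" by (rule sum.cong[OF refl]) (simp add: G_col)
  finally show ?thesis .
qed

lemma pos_ray_Im: "z \<in> pos_ray \<Longrightarrow> Im z = 0"
  by (auto simp: pos_ray_def)

lemma pos_ray_real: "r < 0 \<Longrightarrow> complex_of_real r \<notin> pos_ray"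
  by (auto simp: pos_ray_def)

lemma main:
  "\<exists>F :: complex \<Rightarrow> (nat \<times> nat \<times> nat) \<Rightarrow> (nat \<times> nat \<times> nat) \<Rightarrow> complex.
     (\<forall>lam. lam \<notin> pos_ray \<longrightarrow> (\<forall>g.
        (\<exists>!U. msfrom_solves Nc adj Kt m L Lhi lam g U) \<and>
        (\<forall>U. msfrom_solves Nc adj Kt m L Lhi lam g U \<longrightarrow>
           (\<forall>t\<in>iface Nc adj Kt. msfrom_output U t = (\<Sum>s\<in>iface Nc adj Kt. F lam t s * g s))))) \<and>
     stieltjes_0inf (iface Nc adj Kt) (\<lambda>lam t s. - F lam t s) \<and>
     (\<forall>lam. 0 < Im lam \<longrightarrow> herm_pd (iface Nc adj Kt) (mat_Im (\<lambda>t s. - F lam t s))) \<and>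
     (\<forall>r::real. r < 0 \<longrightarrow> herm_pd (iface Nc adj Kt) (\<lambda>t s. - F (complex_of_real r) t s))"
proof -
  define S where "S = - pos_ray"
  have inj: "\<forall>c\<in>D. v c = 0" if z: "z \<in> S" and hv: "\<forall>r\<in>D. (\<Sum>c\<in>D. Amat z r c * v c) = 0" for z v
  proof -
    have "\<forall>r\<in>D. res z (toU v) r = G (\<lambda>t. 0) r" using hv by (simp add: res_lin G_zero)
    moreover have "\<forall>i k x. (i,k,x) \<notin> D \<longrightarrow> toU v i k x = 0" by (simp add: toU_def)
    ultimately have "msfrom_solves Nc adj Kt m L Lhi z (\<lambda>t. 0) (toU v)" using solves_iff by blast
    from zero_sol[OF _ this] z have all0: "\<forall>i k x. toU v i k x = 0" by (simp add: S_def)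
    show ?thesis
    proof (intro ballI)
      fix c assume c: "c \<in> D"
      obtain i k x where cc: "c = (i,k,x)" by (cases c) auto
      have "toU v i k x = 0" using all0 by blast
      then show "v c = 0" using c cc by (simp add: toU_def)
    qed
  qed
  have hol: "\<And>x y. (\<lambda>z. Amat z x y) holomorphic_on S" by (rule Amat_holo)
  obtain B where Bh: "\<forall>x y. (\<lambda>z. B z x y) holomorphic_on S"
    and Bl: "\<forall>z\<in>S. \<forall>v. \<forall>x\<in>D. (\<Sum>y\<in>D. B z x y * (\<Sum>w\<in>D. Amat z y w * v w)) = v x"
    and Br: "\<forall>z\<in>S. \<forall>v. \<forall>x\<in>D. (\<Sum>y\<in>D. Amat z x y * (\<Sum>w\<in>D. B z y w * v w)) = v x"
  proof -
    have "\<exists>B. (\<forall>x y. (\<lambda>z. B z x y) holomorphic_on S) \<and>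
     (\<forall>z\<in>S. \<forall>v. \<forall>x\<in>D. (\<Sum>y\<in>D. B z x y * (\<Sum>w\<in>D. Amat z y w * v w)) = v x) \<and>
     (\<forall>z\<in>S. \<forall>v. \<forall>x\<in>D. (\<Sum>y\<in>D. Amat z x y * (\<Sum>w\<in>D. B z y w * v w)) = v x)"
      by (rule inv_holo_set[OF fin_D hol]) (rule inj)
    then show ?thesis using that by blast
  qed
  define F where "F z t s = B z (col t) (col s)" for z t s
  define sol where "sol z g = toU (\<lambda>r. \<Sum>c\<in>D. B z r c * G g c)" for z g
  have sol_solves: "msfrom_solves Nc adj Kt m L Lhi z g (sol z g)" if z: "z \<in> S" for z g
  proof -
    have "\<forall>r\<in>D. res z (sol z g) r = G g r"
      unfolding sol_def res_lin using Br z by blast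
    moreover have "\<forall>i k x. (i,k,x) \<notin> D \<longrightarrow> sol z g i k x = 0" by (simp add: sol_def toU_def)
    ultimately show ?thesis using solves_iff by blast
  qed
  have sol_uniq: "U = sol z g" if z: "z \<in> S" and U: "msfrom_solves Nc adj Kt m L Lhi z g U" for z g U
  proof -
    define w where "w r = (case r of (i,k,x) \<Rightarrow> U i k x)" for r
    have Z: "\<forall>i k x. (i,k,x) \<notin> D \<longrightarrow> U i k x = 0" and R: "\<forall>r\<in>D. res z U r = G g r"
      using U solves_iff by blast+
    have Uw: "U = toU w" unfolding toU_def w_def using Z by (auto simp: fun_eq_iff)
    have wr: "w r = (\<Sum>c\<in>D. B z r c * G g c)" if r: "r \<in> D" for r
    proof -
      have "w r = (\<Sum>y\<in>D. B z r y * (\<Sum>c\<in>D. Amat z y c * w c))" using Bl z r by simp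
      also have "\<dots> = (\<Sum>y\<in>D. B z r y * G g y)"
      proof (rule sum.cong[OF refl])
        fix y assume y: "y \<in> D"
        have "(\<Sum>c\<in>D. Amat z y c * w c) = res z (toU w) y" by (simp add: res_lin)
        also have "\<dots> = G g y" using R y Uw by simp
        finally show "B z r y * (\<Sum>c\<in>D. Amat z y c * w c) = B z r y * G g y" by simp
      qed
      finally show ?thesis .
    qed
    show ?thesis unfolding Uw sol_def toU_def using wr by (auto simp: fun_eq_iff)
  qed
  have out: "msfrom_output (sol z g) t = (\<Sum>s\<in>Iset. F z t s * g s)" if t: "t \<in> Iset" for z g t
  proof -
    obtain i j a where tt: "t = (i,j,a)" by (cases t) auto
    have "msfrom_output (sol z g) t = sol z g i 1 (j,a)" by (simp add: tt msfrom_output_def)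
    also have "\<dots> = (\<Sum>c\<in>D. B z (col t) c * G g c)" using col_D[OF t] by (simp add: sol_def toU_def tt col_def)
    also have "\<dots> = (\<Sum>s\<in>Iset. F z t s * g s)" by (simp add: reindex_G F_def)
    finally show ?thesis .
  qed
  have key: "\<exists>p q. 0 \<le> p \<and> 0 \<le> q \<and> form Iset (\<lambda>t s. - F z t s) w = of_real q - cnj z * of_real p
      \<and> ((\<exists>x\<in>Iset. w x \<noteq> 0) \<longrightarrow> 0 < p)" if z: "z \<in> S" for z w
  proof -
    define U where "U = sol z w"
    have SU: "msfrom_solves Nc adj Kt m L Lhi z w U" using sol_solves[OF z] by (simp add: U_def)
    define p where "p = Re (Pe U)"
    define q where "q = Re (Qe U)"
    have P: "Pe U = of_real p" using Pe_props(1) unfolding p_def by (simp add: complex_eq_iff)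
    have Q: "Qe U = of_real q" using Qe_props(1) unfolding q_def by (simp add: complex_eq_iff)
    have p0: "0 \<le> p" and q0: "0 \<le> q" unfolding p_def q_def using Pe_props(2) Qe_props(2) by auto
    have "form Iset (\<lambda>t s. - F z t s) w = - (\<Sum>x\<in>Iset. cnj (w x) * (\<Sum>y\<in>Iset. F z x y * w y))"
      by (simp add: form_def sum_distrib_left sum_negf mult.assoc)
    also have "\<dots> = - (\<Sum>x\<in>Iset. cnj (w x) * msfrom_output U x)"
      using out unfolding U_def by simp
    also have "\<dots> = - cnj (\<Sum>x\<in>Iset. cnj (msfrom_output U x) * w x)" by (simp add: mult.commute)
    also have "\<dots> = - cnj (z * Pe U - Qe U)" using energy[OF SU] by simp
    also have "\<dots> = of_real q - cnj z * of_real p" using P Q by simp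
    finally have fe: "form Iset (\<lambda>t s. - F z t s) w = of_real q - cnj z * of_real p" .
    have pp: "0 < p" if nz: "\<exists>x\<in>Iset. w x \<noteq> 0"
    proof (rule ccontr)
      assume "\<not> 0 < p"
      then have "Re (Pe U) = 0" using p0 unfolding p_def by simp
      from Pe_props(3)[OF this] have a: "\<forall>i<Nc. \<forall>k\<in>{1..m}. \<forall>x\<in>Bd i. U i k x = 0" .
      have Z: "\<forall>i k x. (i,k,x) \<notin> D \<longrightarrow> U i k x = 0" using SU solves_iff by blast
      have U0: "U = (\<lambda>i k x. 0)"
      proof (intro ext)
        fix i k x show "U i k x = 0"
        proof (cases "(i,k,x) \<in> D")
          case True
          then have "i < Nc" "k \<in> {1..m}" "x \<in> Bd i" by (auto simp: D_def)
          then show ?thesis using a by blast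
        next
          case False then show ?thesis using Z by blast
        qed
      qed
      have "w t = 0" if t: "t \<in> Iset" for t
      proof -
        obtain i j a where tt: "t = (i,j,a)" by (cases t) auto
        have "mv (Bd i) (L i 1) (\<lambda>y. U i 2 y - U i 1 y) (j,a)
          + mv (Bd j) (L j 1) (\<lambda>y. U j 2 y - U j 1 y) (i,a)
          + z * (mv (Bd i) (Lhi i 1) (U i 1) (j,a)
                 + mv (Bd j) (Lhi j 1) (U j 1) (i,a)) = w (i,j,a)"
        proof -
          have IF: "\<forall>(i,j,a)\<in>Iset. mv (Bd i) (L i 1) (\<lambda>y. U i 2 y - U i 1 y) (j,a)
            + mv (Bd j) (L j 1) (\<lambda>y. U j 2 y - U j 1 y) (i,a)
            + z * (mv (Bd i) (Lhi i 1) (U i 1) (j,a)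
                 + mv (Bd j) (Lhi j 1) (U j 1) (i,a)) = w (i,j,a)"
            using SU unfolding msfrom_solves_def by blast
          show ?thesis using bspec[OF IF t[unfolded tt]] by simp
        qed
        then show ?thesis unfolding tt U0 by (simp add: mv_def)
      qed
      then show False using nz by blast
    qed
    show ?thesis using p0 q0 fe pp by blast
  qed
  have pdIm: "herm_pd Iset (mat_Im (\<lambda>t s. - F lam t s))" if lam: "0 < Im lam" for lam
  proof -
    have lS: "lam \<in> S" using lam pos_ray_Im by (auto simp: S_def)
    have "0 < Re (\<Sum>x\<in>Iset. \<Sum>y\<in>Iset. cnj (v x) * mat_Im (\<lambda>t s. - F lam t s) x y * v y)"
      if nz: "\<exists>x\<in>Iset. v x \<noteq> 0" for v
    proof -
      obtain p q where pq: "0 \<le> p" "0 \<le> q" "form Iset (\<lambda>t s. - F lam t s) v = of_real q - cnj lam * of_real p"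
        "(\<exists>x\<in>Iset. v x \<noteq> 0) \<longrightarrow> 0 < p" using key[OF lS, of v] by blast
      have "(\<Sum>x\<in>Iset. \<Sum>y\<in>Iset. cnj (v x) * mat_Im (\<lambda>t s. - F lam t s) x y * v y)
          = form Iset (mat_Im (\<lambda>t s. - F lam t s)) v" by (simp add: form_def)
      also have "\<dots> = of_real (Im lam * p)" unfolding form_mat_Im pq(3) by simp
      finally show ?thesis using pq(4) nz lam by simp
    qed
    then have pos: "\<forall>v. (\<exists>x\<in>Iset. v x \<noteq> 0) \<longrightarrow> 0 < Re (\<Sum>x\<in>Iset. \<Sum>y\<in>Iset. cnj (v x) * mat_Im (\<lambda>t s. - F lam t s) x y * v y)"
      by blast
    have H: "\<forall>x\<in>Iset. \<forall>y\<in>Iset. mat_Im (\<lambda>t s. - F lam t s) y x = cnj (mat_Im (\<lambda>t s. - F lam t s) x y)"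
      by (intro ballI) (rule mat_Im_herm)
    show ?thesis unfolding herm_pd_def using H pos by (rule conjI)
  qed
  have pdRe: "herm_pd Iset (\<lambda>t s. - F (complex_of_real r) t s)" if r: "r < 0" for r
  proof -
    have lS: "complex_of_real r \<in> S" using pos_ray_real[OF r] by (simp add: S_def)
    have fr: "\<exists>p q. 0 \<le> p \<and> 0 \<le> q \<and> form Iset (\<lambda>t s. - F (complex_of_real r) t s) v = of_real (q - r * p)
        \<and> ((\<exists>x\<in>Iset. v x \<noteq> 0) \<longrightarrow> 0 < p)" for v
    proof -
      obtain p q where "0 \<le> p" "0 \<le> q" "form Iset (\<lambda>t s. - F (complex_of_real r) t s) v = of_real q - cnj (complex_of_real r) * of_real p"
        "(\<exists>x\<in>Iset. v x \<noteq> 0) \<longrightarrow> 0 < p" using key[OF lS, of v] by blast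
      then show ?thesis by (intro exI[of _ p] exI[of _ q]) simp
    qed
    have herm: "\<forall>x\<in>Iset. \<forall>y\<in>Iset. - F (complex_of_real r) y x = cnj (- F (complex_of_real r) x y)"
    proof (intro ballI)
      fix x y assume x: "x \<in> Iset" and y: "y \<in> Iset"
      have "Im (form Iset (\<lambda>t s. - F (complex_of_real r) t s) v) = 0" for v
      proof -
        obtain p q where "form Iset (\<lambda>t s. - F (complex_of_real r) t s) v = of_real (q - r * p)"
          using fr[of v] by blast
        then show ?thesis by simp
      qed
      from polar[OF fin_If this x y] show "- F (complex_of_real r) y x = cnj (- F (complex_of_real r) x y)" by simp
    qed
    have "0 < Re (\<Sum>x\<in>Iset. \<Sum>y\<in>Iset. cnj (v x) * (- F (complex_of_real r) x y) * v y)"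
      if nz: "\<exists>x\<in>Iset. v x \<noteq> 0" for v
    proof -
      obtain p q where pq: "0 \<le> p" "0 \<le> q" "form Iset (\<lambda>t s. - F (complex_of_real r) t s) v = of_real (q - r * p)"
        "(\<exists>x\<in>Iset. v x \<noteq> 0) \<longrightarrow> 0 < p" using fr[of v] by blast
      have "(\<Sum>x\<in>Iset. \<Sum>y\<in>Iset. cnj (v x) * (- F (complex_of_real r) x y) * v y)
          = form Iset (\<lambda>t s. - F (complex_of_real r) t s) v" by (simp add: form_def)
      also have "\<dots> = of_real (q - r * p)" by (rule pq(3))
      finally have e: "(\<Sum>x\<in>Iset. \<Sum>y\<in>Iset. cnj (v x) * (- F (complex_of_real r) x y) * v y) = of_real (q - r * p)" .
      have "0 < p" using pq(4) nz by blast
      then have "0 < - r * p" using r by (simp add: mult_neg_pos)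
      then show ?thesis unfolding e using pq(2) by simp
    qed
    then have pos: "\<forall>v. (\<exists>x\<in>Iset. v x \<noteq> 0) \<longrightarrow> 0 < Re (\<Sum>x\<in>Iset. \<Sum>y\<in>Iset. cnj (v x) * (- F (complex_of_real r) x y) * v y)"
      by blast
    show ?thesis unfolding herm_pd_def using herm pos by (rule conjI)
  qed
  have sol_part: "\<forall>lam. lam \<notin> pos_ray \<longrightarrow> (\<forall>g.
        (\<exists>!U. msfrom_solves Nc adj Kt m L Lhi lam g U) \<and>
        (\<forall>U. msfrom_solves Nc adj Kt m L Lhi lam g U \<longrightarrow>
           (\<forall>t\<in>iface Nc adj Kt. msfrom_output U t = (\<Sum>s\<in>iface Nc adj Kt. F lam t s * g s))))"
  proof (intro allI impI)
    fix lam g assume lam: "lam \<notin> pos_ray"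
    then have lS: "lam \<in> S" by (simp add: S_def)
    have e: "\<exists>!U. msfrom_solves Nc adj Kt m L Lhi lam g U"
      by (rule ex1I[of _ "sol lam g"]) (use sol_solves[OF lS] sol_uniq[OF lS] in auto)
    have o: "\<forall>U. msfrom_solves Nc adj Kt m L Lhi lam g U \<longrightarrow>
           (\<forall>t\<in>iface Nc adj Kt. msfrom_output U t = (\<Sum>s\<in>iface Nc adj Kt. F lam t s * g s))"
      using sol_uniq[OF lS] out by blast
    show "(\<exists>!U. msfrom_solves Nc adj Kt m L Lhi lam g U) \<and>
        (\<forall>U. msfrom_solves Nc adj Kt m L Lhi lam g U \<longrightarrow>
           (\<forall>t\<in>iface Nc adj Kt. msfrom_output U t = (\<Sum>s\<in>iface Nc adj Kt. F lam t s * g s)))"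
      using e o by blast
  qed
  have st: "stieltjes_0inf (iface Nc adj Kt) (\<lambda>lam t s. - F lam t s)"
    unfolding stieltjes_0inf_def
  proof (intro conjI allI impI ballI)
    fix x y assume "x \<in> Iset" "y \<in> Iset"
    show "(\<lambda>z. - F z x y) holomorphic_on (- pos_ray)"
    proof -
      have "(\<lambda>z. B z (col x) (col y)) holomorphic_on S" by (rule Bh[rule_format])
      then have "(\<lambda>z. - B z (col x) (col y)) holomorphic_on S" by (rule holomorphic_on_minus)
      then show ?thesis unfolding F_def S_def .
    qed
  next
    fix z :: complex assume z: "0 < Im z"
    show "herm_psd Iset (mat_Im (\<lambda>t s. - F z t s))" by (rule pd_psd[OF pdIm[OF z]])
  next
    fix t :: real assume t: "t < 0"
    show "herm_psd Iset (\<lambda>a b. - F (complex_of_real t) a b)" by (rule pd_psd[OF pdRe[OF t]])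
  qed
  have pdIm': "\<forall>lam. 0 < Im lam \<longrightarrow> herm_pd (iface Nc adj Kt) (mat_Im (\<lambda>t s. - F lam t s))"
    using pdIm by blast
  have pdRe': "\<forall>r::real. r < 0 \<longrightarrow> herm_pd (iface Nc adj Kt) (\<lambda>t s. - F (complex_of_real r) t s)"
    using pdRe by blast
  show ?thesis by (rule exI[of _ F]) (intro conjI sol_part st pdIm' pdRe')
qed

end

theorem proposition1:
  fixes Nc m :: nat
    and adj :: "nat \<Rightarrow> nat \<Rightarrow> bool"
    and Kt :: "nat \<Rightarrow> nat \<Rightarrow> nat"
    and L Lh Lhi :: "nat \<Rightarrow> nat \<Rightarrow> (nat \<times> nat) \<Rightarrow> (nat \<times> nat) \<Rightarrow> real"
  assumes m_pos: "1 \<le> m"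
    and adj_sym: "\<And>i j. adj i j \<Longrightarrow> adj j i"
    and adj_irrefl: "\<And>i. \<not> adj i i"
    and Kt_sym: "\<And>i j. adj i j \<Longrightarrow> Kt i j = Kt j i"
    and L_spd: "\<And>i k. i < Nc \<Longrightarrow> 1 \<le> k \<Longrightarrow> k \<le> m \<Longrightarrow> spd_on (bnd Nc adj Kt i) (L i k)"
    and Lh_spd: "\<And>i k. i < Nc \<Longrightarrow> 1 \<le> k \<Longrightarrow> k \<le> m \<Longrightarrow> spd_on (bnd Nc adj Kt i) (Lh i k)"
    and Lhi_inv: "\<And>i k x y. i < Nc \<Longrightarrow> 1 \<le> k \<Longrightarrow> k \<le> m \<Longrightarrow>
        x \<in> bnd Nc adj Kt i \<Longrightarrow> y \<in> bnd Nc adj Kt i \<Longrightarrow>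
        (\<Sum>z\<in>bnd Nc adj Kt i. Lh i k x z * Lhi i k z y) = (if x = y then 1 else 0)"
  shows "\<exists>F :: complex \<Rightarrow> (nat \<times> nat \<times> nat) \<Rightarrow> (nat \<times> nat \<times> nat) \<Rightarrow> complex.
     (\<forall>lam. lam \<notin> pos_ray \<longrightarrow> (\<forall>g.
        (\<exists>!U. msfrom_solves Nc adj Kt m L Lhi lam g U) \<and>
        (\<forall>U. msfrom_solves Nc adj Kt m L Lhi lam g U \<longrightarrow>
           (\<forall>t\<in>iface Nc adj Kt. msfrom_output U t = (\<Sum>s\<in>iface Nc adj Kt. F lam t s * g s))))) \<and>
     stieltjes_0inf (iface Nc adj Kt) (\<lambda>lam t s. - F lam t s) \<and>
     (\<forall>lam. 0 < Im lam \<longrightarrow> herm_pd (iface Nc adj Kt) (mat_Im (\<lambda>t s. - F lam t s))) \<and>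
     (\<forall>r::real. r < 0 \<longrightarrow> herm_pd (iface Nc adj Kt) (\<lambda>t s. - F (complex_of_real r) t s))"
proof -
  have I: "msf Nc m adj Kt L Lh Lhi" unfolding msf_def using assms by blast
  show ?thesis by (rule msf.main[OF I])
qed

end
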